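(* Let $L>0$, $g\in L^2((0,L)^2;\mathbb{C})$, and let $P:L^2(0,L)\to L^2(0,L)$ be a bounded linear operator such that $P^*(D(A^* ))\subset D(A^* )$ and $P$ is invertible. Then there exists a bounded linear form $\Gamma:L^2(0,L)\to\mathbb{C}$ such that $A_0^*P^*z=P^*A^*z+P^*\Gamma^*B^*z$ for all $z\in D(A^* )$ if and only if $A_0^*P^*z-P^*A^*z=0$ for all $z\in\ker B^*$.
   Context: $D(A^* )=\{z\in H^1(0,L):z(0)=0\}$; $A^*z(x)=-z'(x)+\int_0^L\overline{g(y,x)}z(y)dy$ and $A_0^*z=-z'$, both with domain $D(A^* )$; $B^*:D(A^* )\to\mathbb{C}$, $B^*z=z(L)$, so $\ker B^*=\{z\in H^1(0,L):z(0)=z(L)=0\}$; $\Gamma^*$ is the adjoint of $\Gamma$. *)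

theory Defs
  imports "HOL-Analysis.Analysis"
begin

text \<open>Elements of L2(0,L;C) are represented by functions real => complex;
  equality in L2 is equality almost everywhere on [0,L].\<close>

definition l2 :: "real \<Rightarrow> (real \<Rightarrow> complex) \<Rightarrow> bool" where
  "l2 L f \<longleftrightarrow> f measurable_on {0..L} \<and> (\<lambda>x. (cmod (f x))\<^sup>2) integrable_on {0..L}"

definition l2sq :: "real \<Rightarrow> (real \<times> real \<Rightarrow> complex) \<Rightarrow> bool" where
  "l2sq L g \<longleftrightarrow> g measurable_on ({0..L} \<times> {0..L}) \<and>
     (\<lambda>p. (cmod (g p))\<^sup>2) integrable_on ({0..L} \<times> {0..L})"

definition ae_eq :: "real \<Rightarrow> (real \<Rightarrow> complex) \<Rightarrow> (real \<Rightarrow> complex) \<Rightarrow> bool" where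
  "ae_eq L f g \<longleftrightarrow> negligible {x \<in> {0..L}. f x \<noteq> g x}"

definition l2_inner :: "real \<Rightarrow> (real \<Rightarrow> complex) \<Rightarrow> (real \<Rightarrow> complex) \<Rightarrow> complex" where
  "l2_inner L f g = integral {0..L} (\<lambda>x. f x * cnj (g x))"

definition l2_norm :: "real \<Rightarrow> (real \<Rightarrow> complex) \<Rightarrow> real" where
  "l2_norm L f = sqrt (integral {0..L} (\<lambda>x. (cmod (f x))\<^sup>2))"

definition bounded_op :: "real \<Rightarrow> ((real \<Rightarrow> complex) \<Rightarrow> (real \<Rightarrow> complex)) \<Rightarrow> bool" where
  "bounded_op L P \<longleftrightarrow>
     (\<forall>f. l2 L f \<longrightarrow> l2 L (P f)) \<and>
     (\<forall>f g a b. l2 L f \<and> l2 L g \<longrightarrow>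
        ae_eq L (P (\<lambda>x. a * f x + b * g x)) (\<lambda>x. a * P f x + b * P g x)) \<and>
     (\<exists>C. \<forall>f. l2 L f \<longrightarrow> l2_norm L (P f) \<le> C * l2_norm L f)"

definition invertible_op :: "real \<Rightarrow> ((real \<Rightarrow> complex) \<Rightarrow> (real \<Rightarrow> complex)) \<Rightarrow> bool" where
  "invertible_op L P \<longleftrightarrow> (\<exists>Q. bounded_op L Q \<and>
     (\<forall>f. l2 L f \<longrightarrow> ae_eq L (Q (P f)) f \<and> ae_eq L (P (Q f)) f))"

definition op_adjoint :: "real \<Rightarrow> ((real \<Rightarrow> complex) \<Rightarrow> (real \<Rightarrow> complex))
    \<Rightarrow> ((real \<Rightarrow> complex) \<Rightarrow> (real \<Rightarrow> complex)) \<Rightarrow> bool" where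
  "op_adjoint L P Ps \<longleftrightarrow> (\<forall>g. l2 L g \<longrightarrow> l2 L (Ps g)) \<and>
     (\<forall>f g. l2 L f \<and> l2 L g \<longrightarrow> l2_inner L (P f) g = l2_inner L f (Ps g))"

definition bounded_form :: "real \<Rightarrow> ((real \<Rightarrow> complex) \<Rightarrow> complex) \<Rightarrow> bool" where
  "bounded_form L \<Gamma> \<longleftrightarrow>
     (\<forall>f g a b. l2 L f \<and> l2 L g \<longrightarrow> \<Gamma> (\<lambda>x. a * f x + b * g x) = a * \<Gamma> f + b * \<Gamma> g) \<and>
     (\<exists>C. \<forall>f. l2 L f \<longrightarrow> cmod (\<Gamma> f) \<le> C * l2_norm L f)"

text \<open>Gs : C -> L2 is the adjoint of the form G (inner product on C: a * cnj b).\<close>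
definition form_adjoint :: "real \<Rightarrow> ((real \<Rightarrow> complex) \<Rightarrow> complex)
    \<Rightarrow> (complex \<Rightarrow> (real \<Rightarrow> complex)) \<Rightarrow> bool" where
  "form_adjoint L \<Gamma> \<Gamma>s \<longleftrightarrow> (\<forall>c. l2 L (\<Gamma>s c)) \<and>
     (\<forall>f c. l2 L f \<longrightarrow> \<Gamma> f * cnj c = l2_inner L f (\<Gamma>s c))"

text \<open>z (a representative) lies in D(A*) = {z in H1(0,L). z(0)=0} with derivative h:
  z(x) = int_0^x h for x in [0,L], h in L2.\<close>
definition in_DAs :: "real \<Rightarrow> (real \<Rightarrow> complex) \<Rightarrow> (real \<Rightarrow> complex) \<Rightarrow> bool" where
  "in_DAs L z h \<longleftrightarrow> l2 L h \<and> (\<forall>x\<in>{0..L}. z x = integral {0..x} h)"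

definition Astar :: "real \<Rightarrow> (real \<times> real \<Rightarrow> complex) \<Rightarrow> (real \<Rightarrow> complex)
    \<Rightarrow> (real \<Rightarrow> complex) \<Rightarrow> (real \<Rightarrow> complex)" where
  "Astar L g z h = (\<lambda>x. - h x + integral {0..L} (\<lambda>y. cnj (g (y, x)) * z y))"

end

theory Submission
  imports Defs
begin


abbreviation LM :: "real \<Rightarrow> real measure" where "LM L \<equiv> lebesgue_on {0..L}"

lemma AE_LM_iff: "(AE x in LM L. P x) \<longleftrightarrow> negligible {x\<in>{0..L}. \<not> P x}"
proof -
  have "(AE x in LM L. P x) \<longleftrightarrow> (AE x in lebesgue. x \<in> {0..L} \<longrightarrow> P x)"
    by (rule AE_restrict_space_iff) auto
  also have "\<dots> \<longleftrightarrow> {x\<in>space lebesgue. \<not> (x \<in> {0..L} \<longrightarrow> P x)} \<in> null_sets lebesgue"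
    by (rule completion.AE_iff_null_sets)
  also have "\<dots> \<longleftrightarrow> negligible {x\<in>{0..L}. \<not> P x}"
    by (simp add: negligible_iff_null_sets conj_commute)
  finally show ?thesis .
qed

lemma ae_eq_AE: "ae_eq L f g \<longleftrightarrow> (AE x in LM L. f x = g x)"
  unfolding ae_eq_def AE_LM_iff by simp

lemma l2_iff: "l2 L f \<longleftrightarrow> f \<in> borel_measurable (LM L) \<and> integrable (LM L) (\<lambda>x. (cmod (f x))\<^sup>2)"
proof -
  have S: "{0..L} \<in> sets lebesgue" by simp
  have 1: "f measurable_on {0..L} \<longleftrightarrow> f \<in> borel_measurable (LM L)"
    by (rule measurable_on_iff_borel_measurable[OF S])
  have 2: "(\<lambda>x. (cmod (f x))\<^sup>2) integrable_on {0..L} \<longleftrightarrow> integrable (LM L) (\<lambda>x. (cmod (f x))\<^sup>2)"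
    if "f \<in> borel_measurable (LM L)"
  proof
    assume "(\<lambda>x. (cmod (f x))\<^sup>2) integrable_on {0..L}"
    then have "(\<lambda>x. (cmod (f x))\<^sup>2) absolutely_integrable_on {0..L}"
      by (rule nonnegative_absolutely_integrable_1) auto
    then show "integrable (LM L) (\<lambda>x. (cmod (f x))\<^sup>2)"
      using absolutely_integrable_measurable_real[OF S] by (simp add: abs_of_nonneg)
  next
    assume "integrable (LM L) (\<lambda>x. (cmod (f x))\<^sup>2)"
    then show "(\<lambda>x. (cmod (f x))\<^sup>2) integrable_on {0..L}"
      by (rule integrable_on_lebesgue_on[OF _ S])
  qed
  show ?thesis unfolding l2_def using 1 2 by blast
qed

lemma l2_measurable: "l2 L f \<Longrightarrow> f \<in> borel_measurable (LM L)"
  by (simp add: l2_iff)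

lemma l2_sq_integrable: "l2 L f \<Longrightarrow> integrable (LM L) (\<lambda>x. (cmod (f x))\<^sup>2)"
  by (simp add: l2_iff)

lemma sq_sum_le: "((p::real) + q)\<^sup>2 \<le> 2 * p\<^sup>2 + 2 * q\<^sup>2"
proof -
  have "0 \<le> (p - q)\<^sup>2" by simp
  then show ?thesis by (simp add: power2_eq_square algebra_simps)
qed

lemma l2_lin:
  assumes "l2 L f" "l2 L g"
  shows "l2 L (\<lambda>x. a * f x + b * g x)"
  unfolding l2_iff
proof
  have [measurable]: "f \<in> borel_measurable (LM L)" "g \<in> borel_measurable (LM L)"
    using assms by (auto simp: l2_iff)
  show m: "(\<lambda>x. a * f x + b * g x) \<in> borel_measurable (LM L)" by measurable
  have i: "integrable (LM L) (\<lambda>x. 2 * (cmod a)\<^sup>2 * (cmod (f x))\<^sup>2 + 2 * (cmod b)\<^sup>2 * (cmod (g x))\<^sup>2)"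
    using assms by (auto simp: l2_iff)
  show "integrable (LM L) (\<lambda>x. (cmod (a * f x + b * g x))\<^sup>2)"
  proof (rule Bochner_Integration.integrable_bound[OF i])
    show "(\<lambda>x. (cmod (a * f x + b * g x))\<^sup>2) \<in> borel_measurable (LM L)" using m by measurable
    show "AE x in LM L. norm ((cmod (a * f x + b * g x))\<^sup>2) \<le> norm (2 * (cmod a)\<^sup>2 * (cmod (f x))\<^sup>2 + 2 * (cmod b)\<^sup>2 * (cmod (g x))\<^sup>2)"
    proof (rule AE_I2)
      fix x
      have "cmod (a * f x + b * g x) \<le> cmod a * cmod (f x) + cmod b * cmod (g x)"
        by (metis norm_mult norm_triangle_ineq)
      then have "(cmod (a * f x + b * g x))\<^sup>2 \<le> (cmod a * cmod (f x) + cmod b * cmod (g x))\<^sup>2"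
        by (simp add: power_mono)
      also have "\<dots> \<le> 2 * (cmod a)\<^sup>2 * (cmod (f x))\<^sup>2 + 2 * (cmod b)\<^sup>2 * (cmod (g x))\<^sup>2"
        using sq_sum_le[of "cmod a * cmod (f x)" "cmod b * cmod (g x)"] by (simp add: power_mult_distrib)
      finally show "norm ((cmod (a * f x + b * g x))\<^sup>2) \<le> norm (2 * (cmod a)\<^sup>2 * (cmod (f x))\<^sup>2 + 2 * (cmod b)\<^sup>2 * (cmod (g x))\<^sup>2)"
        by simp
    qed
  qed
qed

lemma l2_scale: "l2 L f \<Longrightarrow> l2 L (\<lambda>x. a * f x)"
  using l2_lin[of L f f a 0] by simp

lemma l2_add: "l2 L f \<Longrightarrow> l2 L g \<Longrightarrow> l2 L (\<lambda>x. f x + g x)"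
  using l2_lin[of L f g 1 1] by simp

lemma l2_diff: "l2 L f \<Longrightarrow> l2 L g \<Longrightarrow> l2 L (\<lambda>x. f x - g x)"
  using l2_lin[of L f g 1 "-1"] by simp

lemma l2_uminus: "l2 L f \<Longrightarrow> l2 L (\<lambda>x. - f x)"
  using l2_scale[of L f "-1"] by simp

lemma l2_zero: "l2 L (\<lambda>x. 0)"
  by (simp add: l2_iff)

lemma l2_ae: assumes "l2 L f" "ae_eq L f g" shows "l2 L g"
proof -
  let ?S = "{x\<in>{0..L}. f x \<noteq> g x}"
  have n: "negligible ?S" using assms(2) by (simp add: ae_eq_def)
  have m: "g measurable_on {0..L}"
  proof (rule measurable_on_spike[OF _ n])
    show "f measurable_on {0..L}" using assms(1) by (simp add: l2_def)
    show "g x = f x" if "x \<in> {0..L} - ?S" for x using that by auto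
  qed
  have "(\<lambda>x. (cmod (g x))\<^sup>2) integrable_on {0..L}"
  proof (rule integrable_spike[OF _ n])
    show "(\<lambda>x. (cmod (f x))\<^sup>2) integrable_on {0..L}" using assms(1) by (simp add: l2_def)
  qed auto
  then show ?thesis using m by (simp add: l2_def)
qed

definition nsq :: "real \<Rightarrow> (real \<Rightarrow> complex) \<Rightarrow> real" where
  "nsq L f = integral\<^sup>L (LM L) (\<lambda>x. (cmod (f x))\<^sup>2)"

lemma l2_norm_nsq: "l2 L f \<Longrightarrow> l2_norm L f = sqrt (nsq L f)"
  unfolding l2_norm_def nsq_def
  by (subst lebesgue_integral_eq_integral) (auto simp: l2_iff)

lemma nsq_nonneg: "0 \<le> nsq L f"
  unfolding nsq_def by simp

lemma l2_prod_integrable: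
  assumes "l2 L f" "l2 L g"
  shows "integrable (LM L) (\<lambda>x. f x * cnj (g x))"
proof -
  have [measurable]: "f \<in> borel_measurable (LM L)" "g \<in> borel_measurable (LM L)"
    using assms by (auto simp: l2_iff)
  have i: "integrable (LM L) (\<lambda>x. (cmod (f x))\<^sup>2 + (cmod (g x))\<^sup>2)"
    using assms by (auto simp: l2_iff)
  show ?thesis
  proof (rule Bochner_Integration.integrable_bound[OF i])
    show "(\<lambda>x. f x * cnj (g x)) \<in> borel_measurable (LM L)"
      by (intro borel_measurable_times borel_measurable_continuous_on[where f=cnj]) (auto intro: continuous_intros)
    show "AE x in LM L. norm (f x * cnj (g x)) \<le> norm ((cmod (f x))\<^sup>2 + (cmod (g x))\<^sup>2)"
    proof (rule AE_I2)
      fix x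
      have "0 \<le> (cmod (f x) - cmod (g x))\<^sup>2" by simp
      then have "cmod (f x) * cmod (g x) \<le> (cmod (f x))\<^sup>2 + (cmod (g x))\<^sup>2"
        by (simp add: power2_eq_square algebra_simps)
           (smt (verit, best) mult_nonneg_nonneg norm_ge_zero)
      then show "norm (f x * cnj (g x)) \<le> norm ((cmod (f x))\<^sup>2 + (cmod (g x))\<^sup>2)"
        by (simp add: norm_mult)
    qed
  qed
qed

lemma l2_inner_LM:
  assumes "l2 L f" "l2 L g"
  shows "l2_inner L f g = integral\<^sup>L (LM L) (\<lambda>x. f x * cnj (g x))"
  unfolding l2_inner_def
  by (subst lebesgue_integral_eq_integral) (auto intro: l2_prod_integrable[OF assms])

lemma l2_abs_integrable:
  assumes "l2 L f" "l2 L g"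
  shows "integrable (LM L) (\<lambda>x. cmod (f x) * cmod (g x))"
  using integrable_norm[OF l2_prod_integrable[OF assms]] by (simp add: norm_mult)

lemma l2_inner_lin_left:
  assumes "l2 L f" "l2 L g" "l2 L u"
  shows "l2_inner L (\<lambda>x. a * f x + b * g x) u = a * l2_inner L f u + b * l2_inner L g u"
proof -
  have i1: "integrable (LM L) (\<lambda>x. f x * cnj (u x))" by (rule l2_prod_integrable[OF assms(1,3)])
  have i2: "integrable (LM L) (\<lambda>x. g x * cnj (u x))" by (rule l2_prod_integrable[OF assms(2,3)])
  have "l2_inner L (\<lambda>x. a * f x + b * g x) u = integral\<^sup>L (LM L) (\<lambda>x. a * (f x * cnj (u x)) + b * (g x * cnj (u x)))"
    by (subst l2_inner_LM[OF l2_lin[OF assms(1,2)] assms(3)]) (simp add: algebra_simps)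
  also have "\<dots> = a * integral\<^sup>L (LM L) (\<lambda>x. f x * cnj (u x)) + b * integral\<^sup>L (LM L) (\<lambda>x. g x * cnj (u x))"
    using i1 i2 by simp
  finally show ?thesis using l2_inner_LM assms by simp
qed

lemma l2_inner_cnj:
  assumes "l2 L f" "l2 L g"
  shows "l2_inner L g f = cnj (l2_inner L f g)"
proof -
  have "cnj (integral\<^sup>L (LM L) (\<lambda>x. f x * cnj (g x))) = integral\<^sup>L (LM L) (\<lambda>x. cnj (f x * cnj (g x)))"
    by (rule Bochner_Integration.integral_cnj[symmetric])
  then show ?thesis using assms by (simp add: l2_inner_LM mult.commute)
qed

lemma l2_inner_lin_right:
  assumes "l2 L f" "l2 L g" "l2 L u"
  shows "l2_inner L u (\<lambda>x. a * f x + b * g x) = cnj a * l2_inner L u f + cnj b * l2_inner L u g"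
  using l2_inner_cnj[OF l2_lin[OF assms(1,2)] assms(3), of a b] l2_inner_lin_left[OF assms, of a b]
    l2_inner_cnj[OF assms(1,3)] l2_inner_cnj[OF assms(2,3)]
  by simp

lemma l2_inner_self:
  assumes "l2 L f"
  shows "l2_inner L f f = complex_of_real (nsq L f)"
  using assms by (simp add: l2_inner_LM nsq_def complex_norm_square[symmetric] del: of_real_power)

lemma nsq_ae:
  assumes "l2 L f" "ae_eq L f g" shows "nsq L f = nsq L g"
proof -
  have "l2 L g" by (rule l2_ae[OF assms])
  then show ?thesis
    unfolding nsq_def using assms by (intro integral_cong_AE) (auto simp: ae_eq_AE l2_iff elim: AE_mp)
qed

lemma l2_inner_ae_left:
  assumes "ae_eq L f f'" shows "l2_inner L f g = l2_inner L f' g"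
  unfolding l2_inner_def using assms unfolding ae_eq_def
  by (intro integral_spike[of "{x\<in>{0..L}. f x \<noteq> f' x}"]) auto

lemma l2_inner_ae_right:
  assumes "ae_eq L g g'" shows "l2_inner L f g = l2_inner L f g'"
  unfolding l2_inner_def using assms unfolding ae_eq_def
  by (intro integral_spike[of "{x\<in>{0..L}. g x \<noteq> g' x}"]) auto

lemma nsq_zero_iff:
  assumes "l2 L f" shows "nsq L f = 0 \<longleftrightarrow> ae_eq L f (\<lambda>x. 0)"
proof -
  have "nsq L f = 0 \<longleftrightarrow> (AE x in LM L. (cmod (f x))\<^sup>2 = 0)"
    unfolding nsq_def by (rule integral_nonneg_eq_0_iff_AE) (use assms in \<open>auto simp: l2_iff\<close>)
  then show ?thesis by (simp add: ae_eq_AE)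
qed

lemma quad_disc:
  fixes A B C :: real
  assumes B: "0 \<le> B" and q: "\<And>s. 0 \<le> A - 2 * s * C + s\<^sup>2 * B"
  shows "C\<^sup>2 \<le> A * B"
proof (cases "B = 0")
  case True
  have "C = 0"
  proof (rule ccontr)
    assume "C \<noteq> 0"
    have "0 \<le> A - 2 * ((A + 1) / (2 * C)) * C" using q[of "(A + 1) / (2 * C)"] True by simp
    with \<open>C \<noteq> 0\<close> show False by (simp add: field_simps)
  qed
  then show ?thesis using True by simp
next
  case False
  then have Bp: "B > 0" using B by simp
  have "0 \<le> A - 2 * (C / B) * C + (C / B)\<^sup>2 * B" by (rule q)
  also have "\<dots> = A - C\<^sup>2 / B" using Bp by (simp add: field_simps power2_eq_square)
  finally have "C\<^sup>2 / B \<le> A" by simp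
  then show ?thesis using Bp by (simp add: field_simps mult.commute)
qed

lemma l2_CS_real:
  assumes "l2 L f" "l2 L g"
  shows "integral\<^sup>L (LM L) (\<lambda>x. cmod (f x) * cmod (g x)) \<le> sqrt (nsq L f) * sqrt (nsq L g)"
proof -
  let ?A = "nsq L f" and ?B = "nsq L g" and ?C = "integral\<^sup>L (LM L) (\<lambda>x. cmod (f x) * cmod (g x))"
  have iA: "integrable (LM L) (\<lambda>x. (cmod (f x))\<^sup>2)" and iB: "integrable (LM L) (\<lambda>x. (cmod (g x))\<^sup>2)"
    using assms by (auto simp: l2_iff)
  have iC: "integrable (LM L) (\<lambda>x. cmod (f x) * cmod (g x))" by (rule l2_abs_integrable[OF assms])
  have q: "0 \<le> ?A - 2 * s * ?C + s\<^sup>2 * ?B" for s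
  proof -
    have "0 \<le> integral\<^sup>L (LM L) (\<lambda>x. (cmod (f x))\<^sup>2 - 2 * s * (cmod (f x) * cmod (g x)) + s\<^sup>2 * (cmod (g x))\<^sup>2)"
    proof (rule integral_nonneg_AE, rule AE_I2)
      fix x
      have "0 \<le> (cmod (f x) - s * cmod (g x))\<^sup>2" by simp
      then show "0 \<le> (cmod (f x))\<^sup>2 - 2 * s * (cmod (f x) * cmod (g x)) + s\<^sup>2 * (cmod (g x))\<^sup>2"
        by (simp add: power2_eq_square algebra_simps)
    qed
    also have "\<dots> = ?A - 2 * s * ?C + s\<^sup>2 * ?B"
      using iA iB iC by (simp add: nsq_def)
    finally show ?thesis .
  qed
  have "?C\<^sup>2 \<le> ?A * ?B" by (rule quad_disc[OF nsq_nonneg q])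
  then have "sqrt (?C\<^sup>2) \<le> sqrt (?A * ?B)" by (rule real_sqrt_le_mono)
  then show ?thesis by (simp add: real_sqrt_mult)
qed

lemma l2_CS:
  assumes "l2 L f" "l2 L g"
  shows "cmod (l2_inner L f g) \<le> sqrt (nsq L f) * sqrt (nsq L g)"
proof -
  have "cmod (l2_inner L f g) = norm (integral\<^sup>L (LM L) (\<lambda>x. f x * cnj (g x)))"
    by (simp add: l2_inner_LM assms)
  also have "\<dots> \<le> integral\<^sup>L (LM L) (\<lambda>x. norm (f x * cnj (g x)))"
    by (rule integral_norm_bound)
  also have "\<dots> = integral\<^sup>L (LM L) (\<lambda>x. cmod (f x) * cmod (g x))"
    by (simp add: norm_mult)
  also have "\<dots> \<le> sqrt (nsq L f) * sqrt (nsq L g)" by (rule l2_CS_real[OF assms])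
  finally show ?thesis .
qed

lemma nsq_scale: "nsq L (\<lambda>x. c * f x) = (cmod c)\<^sup>2 * nsq L f"
  by (simp add: nsq_def norm_mult power_mult_distrib)

lemma nsq_uminus: "nsq L (\<lambda>x. - f x) = nsq L f"
  by (simp add: nsq_def)

lemma nsq_triangle:
  assumes "l2 L f" "l2 L g"
  shows "sqrt (nsq L (\<lambda>x. f x + g x)) \<le> sqrt (nsq L f) + sqrt (nsq L g)"
proof -
  have iA: "integrable (LM L) (\<lambda>x. (cmod (f x))\<^sup>2)" and iB: "integrable (LM L) (\<lambda>x. (cmod (g x))\<^sup>2)"
    using assms by (auto simp: l2_iff)
  have iC: "integrable (LM L) (\<lambda>x. cmod (f x) * cmod (g x))" by (rule l2_abs_integrable[OF assms])
  have iS: "integrable (LM L) (\<lambda>x. (cmod (f x + g x))\<^sup>2)" using l2_add[OF assms] by (simp add: l2_iff)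
  have "nsq L (\<lambda>x. f x + g x) \<le> integral\<^sup>L (LM L) (\<lambda>x. (cmod (f x))\<^sup>2 + 2 * (cmod (f x) * cmod (g x)) + (cmod (g x))\<^sup>2)"
    unfolding nsq_def
  proof (rule integral_mono_AE[OF iS], (use iA iB iC in simp), rule AE_I2)
    fix x
    have "cmod (f x + g x) \<le> cmod (f x) + cmod (g x)" by (rule norm_triangle_ineq)
    then have "(cmod (f x + g x))\<^sup>2 \<le> (cmod (f x) + cmod (g x))\<^sup>2" by (simp add: power_mono)
    then show "(cmod (f x + g x))\<^sup>2 \<le> (cmod (f x))\<^sup>2 + 2 * (cmod (f x) * cmod (g x)) + (cmod (g x))\<^sup>2"
      by (simp add: power2_eq_square algebra_simps)
  qed
  also have "\<dots> = nsq L f + 2 * integral\<^sup>L (LM L) (\<lambda>x. cmod (f x) * cmod (g x)) + nsq L g"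
    using iA iB iC by (simp add: nsq_def)
  also have "\<dots> \<le> nsq L f + 2 * (sqrt (nsq L f) * sqrt (nsq L g)) + nsq L g"
    using l2_CS_real[OF assms] by simp
  also have "\<dots> = (sqrt (nsq L f) + sqrt (nsq L g))\<^sup>2"
    using nsq_nonneg[of L f] nsq_nonneg[of L g] by (simp add: power2_eq_square algebra_simps)
  finally have "sqrt (nsq L (\<lambda>x. f x + g x)) \<le> sqrt ((sqrt (nsq L f) + sqrt (nsq L g))\<^sup>2)"
    by (rule real_sqrt_le_mono)
  then show ?thesis by (simp add: abs_of_nonneg nsq_nonneg)
qed

lemma cmod_add_sq: "(cmod (a + b))\<^sup>2 = (cmod a)\<^sup>2 + 2 * Re (a * cnj b) + (cmod b)\<^sup>2"
  unfolding cmod_power2 by (simp add: power2_eq_square algebra_simps)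

lemma int3:
  fixes a r b :: "'a \<Rightarrow> real"
  shows "integrable M a \<Longrightarrow> integrable M r \<Longrightarrow> integrable M b \<Longrightarrow>
    integral\<^sup>L M (\<lambda>x. a x + c * r x + b x) = integral\<^sup>L M a + c * integral\<^sup>L M r + integral\<^sup>L M b"
  by simp

lemma nsq_add_expand:
  assumes "l2 L f" "l2 L g"
  shows "nsq L (\<lambda>x. f x + g x) = nsq L f + 2 * Re (l2_inner L f g) + nsq L g"
proof -
  have iA: "integrable (LM L) (\<lambda>x. (cmod (f x))\<^sup>2)" and iB: "integrable (LM L) (\<lambda>x. (cmod (g x))\<^sup>2)"
    using assms by (auto simp: l2_iff)
  have iC: "integrable (LM L) (\<lambda>x. f x * cnj (g x))" by (rule l2_prod_integrable[OF assms])
  then have iR: "integrable (LM L) (\<lambda>x. Re (f x * cnj (g x)))" by (rule integrable_Re)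
  have "nsq L (\<lambda>x. f x + g x) = integral\<^sup>L (LM L) (\<lambda>x. (cmod (f x))\<^sup>2 + 2 * Re (f x * cnj (g x)) + (cmod (g x))\<^sup>2)"
    unfolding nsq_def cmod_add_sq ..
  also have "\<dots> = nsq L f + 2 * integral\<^sup>L (LM L) (\<lambda>x. Re (f x * cnj (g x))) + nsq L g"
    unfolding nsq_def by (rule int3[OF iA iR iB])
  also have "integral\<^sup>L (LM L) (\<lambda>x. Re (f x * cnj (g x))) = Re (l2_inner L f g)"
    unfolding l2_inner_LM[OF assms] by (rule Bochner_Integration.integral_Re[OF iC])
  finally show ?thesis .
qed

lemma nsq_diff_sym: "nsq L (\<lambda>x. f x - g x) = nsq L (\<lambda>x. g x - f x)"
  unfolding nsq_def by (simp add: norm_minus_commute)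

lemma nsq_triangle_diff:
  assumes "l2 L f" "l2 L g" "l2 L h"
  shows "sqrt (nsq L (\<lambda>x. f x - h x)) \<le> sqrt (nsq L (\<lambda>x. f x - g x)) + sqrt (nsq L (\<lambda>x. g x - h x))"
  using nsq_triangle[OF l2_diff[OF assms(1,2)] l2_diff[OF assms(2,3)]] by simp



lemma l2_of_real_cmod: "l2 L f \<Longrightarrow> l2 L (\<lambda>x. complex_of_real (cmod (f x)))"
  unfolding l2_iff by auto

lemma l2_of_real_add:
  "l2 L (\<lambda>x. complex_of_real (a x)) \<Longrightarrow> l2 L (\<lambda>x. complex_of_real (b x)) \<Longrightarrow> l2 L (\<lambda>x. complex_of_real (a x + b x))"
  using l2_add[of L "\<lambda>x. complex_of_real (a x)" "\<lambda>x. complex_of_real (b x)"] by simp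

lemma nsq_of_real: "nsq L (\<lambda>x. complex_of_real (a x)) = integral\<^sup>L (LM L) (\<lambda>x. (a x)\<^sup>2)"
  by (simp add: nsq_def)

lemma geom_half: "(\<Sum>j<n. (1/2::real)^j) \<le> 2"
proof -
  have "(\<Sum>j<n. (1/2::real)^j) = 2 - 2 * (1/2)^n"
    by (induction n) (auto simp: field_simps)
  then show ?thesis by simp
qed

lemma l2_complete:
  fixes f :: "nat \<Rightarrow> real \<Rightarrow> complex"
  assumes l2: "\<And>n. l2 L (f n)"
    and C: "\<And>e. e > 0 \<Longrightarrow> \<exists>N. \<forall>m\<ge>N. \<forall>n\<ge>N. nsq L (\<lambda>x. f m x - f n x) < e"
  shows "\<exists>g. l2 L g \<and> (\<forall>e>0. \<exists>N. \<forall>n\<ge>N. nsq L (\<lambda>x. f n x - g x) < e)"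
proof -
  have "\<forall>k. \<exists>N. \<forall>m\<ge>N. \<forall>n\<ge>N. nsq L (\<lambda>x. f m x - f n x) < (1/4)^k"
    using C by simp
  then obtain N :: "nat \<Rightarrow> nat" where N: "\<And>k m n. m \<ge> N k \<Longrightarrow> n \<ge> N k \<Longrightarrow> nsq L (\<lambda>x. f m x - f n x) < (1/4)^k"
    by metis
  define r where "r = rec_nat (N 0) (\<lambda>k rk. max (Suc rk) (N (Suc k)))"
  have r0: "r 0 = N 0" and rS: "\<And>k. r (Suc k) = max (Suc (r k)) (N (Suc k))"
    by (simp_all add: r_def)
  have rN: "r k \<ge> N k" for k by (cases k) (auto simp: r0 rS)
  have rmono: "strict_mono r" unfolding strict_mono_Suc_iff using rS by auto
  define F where "F k = f (r k)" for k
  have lF: "l2 L (F k)" for k using l2 by (simp add: F_def)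
  have mF[measurable]: "F k \<in> borel_measurable (LM L)" for k using lF by (simp add: l2_iff)
  have dF: "nsq L (\<lambda>x. F (Suc k) x - F k x) < (1/4)^k" for k
    unfolding F_def by (rule N) (use rN[of k] rS[of k] in auto)
  define d where "d k x = cmod (F (Suc k) x - F k x)" for k x
  define S where "S n x = (\<Sum>j<n. d j x)" for n x
  have d_nn: "0 \<le> d k x" for k x by (simp add: d_def)
  have S_nn: "0 \<le> S n x" for n x by (simp add: S_def sum_nonneg d_nn)
  have S_Suc: "S (Suc n) x = S n x + d n x" for n x by (simp add: S_def)
  have S_inc: "S n x \<le> S (Suc n) x" for n x by (simp add: S_Suc d_nn)
  have md[measurable]: "(\<lambda>x. d k x) \<in> borel_measurable (LM L)" for k unfolding d_def by measurable
  have mS[measurable]: "(\<lambda>x. S n x) \<in> borel_measurable (LM L)" for n unfolding S_def by measurable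
  have ld: "l2 L (\<lambda>x. complex_of_real (d k x))" for k
    unfolding d_def by (rule l2_of_real_cmod[OF l2_diff[OF lF lF]])
  have nd: "sqrt (nsq L (\<lambda>x. complex_of_real (d k x))) \<le> (1/2)^k" for k
  proof -
    have "nsq L (\<lambda>x. complex_of_real (d k x)) = nsq L (\<lambda>x. F (Suc k) x - F k x)"
      by (simp add: nsq_def d_def)
    also have "\<dots> \<le> (1/4)^k" using dF[of k] by simp
    finally have "sqrt (nsq L (\<lambda>x. complex_of_real (d k x))) \<le> sqrt ((1/4)^k)"
      by (rule real_sqrt_le_mono)
    also have "sqrt ((1/4::real)^k) = (1/2)^k"
      by (simp add: real_sqrt_power real_sqrt_divide)
    finally show ?thesis .
  qed
  have lS: "l2 L (\<lambda>x. complex_of_real (S n x))" for n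
  proof (induction n)
    case 0 show ?case by (simp add: S_def l2_zero)
  next
    case (Suc n) show ?case unfolding S_Suc by (rule l2_of_real_add[OF Suc ld])
  qed
  have nS: "sqrt (nsq L (\<lambda>x. complex_of_real (S n x))) \<le> (\<Sum>j<n. (1/2)^j)" for n
  proof (induction n)
    case 0 show ?case by (simp add: S_def nsq_def)
  next
    case (Suc n)
    have "sqrt (nsq L (\<lambda>x. complex_of_real (S (Suc n) x)))
        = sqrt (nsq L (\<lambda>x. complex_of_real (S n x) + complex_of_real (d n x)))"
      by (simp add: S_Suc)
    also have "\<dots> \<le> sqrt (nsq L (\<lambda>x. complex_of_real (S n x))) + sqrt (nsq L (\<lambda>x. complex_of_real (d n x)))"
      by (rule nsq_triangle[OF lS ld])
    also have "\<dots> \<le> (\<Sum>j<n. (1/2)^j) + (1/2)^n" using Suc nd[of n] by simp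
    finally show ?case by simp
  qed
  have iS2: "integrable (LM L) (\<lambda>x. (S n x)\<^sup>2)" for n
    using lS[of n] by (simp add: l2_iff)
  have IS2: "integral\<^sup>L (LM L) (\<lambda>x. (S n x)\<^sup>2) \<le> 4" for n
  proof -
    have "sqrt (integral\<^sup>L (LM L) (\<lambda>x. (S n x)\<^sup>2)) \<le> 2"
      using nS[of n] geom_half[of n] by (simp add: nsq_of_real)
    then have "sqrt (integral\<^sup>L (LM L) (\<lambda>x. (S n x)\<^sup>2)) \<le> sqrt 4" by simp
    then show ?thesis by (simp only: real_sqrt_le_iff)
  qed
  define H where "H x = (SUP n. ennreal ((S n x)\<^sup>2))" for x
  have mH[measurable]: "H \<in> borel_measurable (LM L)" unfolding H_def by measurable
  have "(\<integral>\<^sup>+x. H x \<partial>LM L) = (SUP n. \<integral>\<^sup>+x. ennreal ((S n x)\<^sup>2) \<partial>LM L)"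
    unfolding H_def
  proof (rule nn_integral_monotone_convergence_SUP)
    show "incseq (\<lambda>n x. ennreal ((S n x)\<^sup>2))"
    proof (rule incseq_SucI, rule le_funI)
      fix n x show "ennreal ((S n x)\<^sup>2) \<le> ennreal ((S (Suc n) x)\<^sup>2)"
        using S_inc[of n x] S_nn[of n x] by (simp add: power_mono)
    qed
  qed simp
  also have "\<dots> \<le> 4"
  proof (rule SUP_least)
    fix n
    have "(\<integral>\<^sup>+x. ennreal ((S n x)\<^sup>2) \<partial>LM L) = ennreal (integral\<^sup>L (LM L) (\<lambda>x. (S n x)\<^sup>2))"
      by (rule nn_integral_eq_integral[OF iS2]) simp
    also have "\<dots> \<le> 4" using ennreal_leI[OF IS2[of n]] by simp
    finally show "(\<integral>\<^sup>+x. ennreal ((S n x)\<^sup>2) \<partial>LM L) \<le> 4" .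
  qed
  finally have Hle: "(\<integral>\<^sup>+x. H x \<partial>LM L) \<le> 4" .
  then have Hfin: "(\<integral>\<^sup>+x. H x \<partial>LM L) \<noteq> \<infinity>" by (auto simp: top_unique)
  have AEH: "AE x in LM L. H x \<noteq> \<infinity>" by (rule nn_integral_PInf_AE[OF mH Hfin])
  define B where "B x = enn2real (H x)" for x
  have mB[measurable]: "B \<in> borel_measurable (LM L)" unfolding B_def by measurable
  have SB: "(S n x)\<^sup>2 \<le> B x" if "H x \<noteq> \<infinity>" for n x
  proof -
    have "ennreal ((S n x)\<^sup>2) \<le> H x" unfolding H_def by (rule SUP_upper) simp
    then have "enn2real (ennreal ((S n x)\<^sup>2)) \<le> enn2real (H x)"
      by (rule enn2real_mono) (use that in \<open>simp add: top.not_eq_extremum\<close>)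
    then show ?thesis by (simp add: B_def)
  qed
  have iB: "integrable (LM L) B"
  proof (rule integrableI_nonneg)
    show "AE x in LM L. 0 \<le> B x" by (simp add: B_def)
    have "(\<integral>\<^sup>+x. ennreal (B x) \<partial>LM L) \<le> (\<integral>\<^sup>+x. H x \<partial>LM L)"
      by (rule nn_integral_mono) (simp add: B_def ennreal_enn2real_if)
    then show "(\<integral>\<^sup>+x. ennreal (B x) \<partial>LM L) < \<infinity>" using Hfin by (simp add: less_top order_le_less_trans)
  qed simp
  have Fsum: "F n x - F 0 x = (\<Sum>i<n. F (Suc i) x - F i x)" for n x
    using sum_lessThan_telescope[of "\<lambda>i. F i x" n] by simp
  have FS: "cmod (F n x - F 0 x) \<le> S n x" for n x
    unfolding Fsum S_def d_def by (rule norm_sum)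
  have conv: "convergent (\<lambda>k. F k x)" if "H x \<noteq> \<infinity>" for x
  proof -
    have "summable (\<lambda>j. d j x)"
    proof (rule summableI_nonneg_bounded[OF d_nn])
      fix n show "(\<Sum>i<n. d i x) \<le> sqrt (B x)"
        using SB[OF that, of n] S_nn[of n x] by (simp add: S_def real_le_rsqrt)
    qed
    then have "summable (\<lambda>j. F (Suc j) x - F j x)"
      by (rule summable_norm_cancel[OF summable_cong[THEN iffD1, rotated]]) (simp add: d_def)
    then have "(\<lambda>n. \<Sum>i<n. F (Suc i) x - F i x) \<longlonglongrightarrow> (\<Sum>i. F (Suc i) x - F i x)"
      by (rule summable_LIMSEQ)
    then have "(\<lambda>n. F 0 x + (\<Sum>i<n. F (Suc i) x - F i x)) \<longlonglongrightarrow> F 0 x + (\<Sum>i. F (Suc i) x - F i x)"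
      by (intro tendsto_add tendsto_const)
    then have "(\<lambda>n. F n x) \<longlonglongrightarrow> F 0 x + (\<Sum>i. F (Suc i) x - F i x)"
      by (simp add: Fsum[symmetric])
    then show ?thesis by (auto simp: convergent_def)
  qed
  define F' where "F' k x = (if H x \<noteq> \<infinity> then F k x else 0)" for k x
  have mF'[measurable]: "F' k \<in> borel_measurable (LM L)" for k
    unfolding F'_def by measurable
  define g where "g x = lim (\<lambda>k. F' k x)" for x
  have F'lim: "(\<lambda>k. F' k x) \<longlonglongrightarrow> g x" for x
  proof (cases "H x \<noteq> \<infinity>")
    case True
    then have "convergent (\<lambda>k. F' k x)" using conv[OF True] by (simp add: F'_def)
    then show ?thesis by (simp add: g_def convergent_LIMSEQ_iff)
  next
    case False
    then show ?thesis by (simp add: g_def F'_def limI)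
  qed
  have mg[measurable]: "g \<in> borel_measurable (LM L)"
    by (rule borel_measurable_LIMSEQ_metric[OF mF' F'lim])
  have AElim: "AE x in LM L. (\<lambda>k. F k x) \<longlonglongrightarrow> g x"
    using AEH
  proof eventually_elim
    case (elim x)
    then show ?case using F'lim[of x] by (simp add: F'_def)
  qed
  have AEbound: "AE x in LM L. (cmod (g x - F j x))\<^sup>2 \<le> 4 * B x" for j
    using AEH AElim
  proof eventually_elim
    case (elim x)
    have b: "cmod (F n x - F j x) \<le> 2 * sqrt (B x)" for n
    proof -
      have "cmod (F n x - F j x) \<le> cmod (F n x - F 0 x) + cmod (F j x - F 0 x)"
        using norm_triangle_ineq4[of "F n x - F 0 x" "F j x - F 0 x"] by simp
      also have "\<dots> \<le> S n x + S j x" using FS[of n x] FS[of j x] by simp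
      also have "\<dots> \<le> sqrt (B x) + sqrt (B x)"
        using SB[OF elim(1), of n] SB[OF elim(1), of j] S_nn[of n x] S_nn[of j x]
        by (intro add_mono real_le_rsqrt) auto
      finally show ?thesis by simp
    qed
    have "(\<lambda>n. cmod (F n x - F j x)) \<longlonglongrightarrow> cmod (g x - F j x)"
      by (intro tendsto_norm tendsto_diff elim(2) tendsto_const)
    then have "cmod (g x - F j x) \<le> 2 * sqrt (B x)"
      by (rule LIMSEQ_le_const2) (use b in auto)
    then have "(cmod (g x - F j x))\<^sup>2 \<le> (2 * sqrt (B x))\<^sup>2" by (rule power_mono) simp
    also have "\<dots> = 4 * B x"
      using SB[OF elim(1), of 0] by (simp add: power_mult_distrib order_trans[OF zero_le_power2])
    finally show ?case .
  qed
  have i4B: "integrable (LM L) (\<lambda>x. 4 * B x)" using iB by simp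
  have lim0: "(\<lambda>j. integral\<^sup>L (LM L) (\<lambda>x. (cmod (g x - F j x))\<^sup>2)) \<longlonglongrightarrow> integral\<^sup>L (LM L) (\<lambda>x. 0::real)"
  proof (rule integral_dominated_convergence[OF _ _ i4B])
    show "AE x in LM L. (\<lambda>j. (cmod (g x - F j x))\<^sup>2) \<longlonglongrightarrow> 0"
      using AElim
    proof eventually_elim
      case (elim x)
      have "(\<lambda>j. (cmod (g x - F j x))\<^sup>2) \<longlonglongrightarrow> (cmod (g x - g x))\<^sup>2"
        by (intro tendsto_power tendsto_norm tendsto_diff elim tendsto_const)
      then show ?case by simp
    qed
    show "AE x in LM L. norm ((cmod (g x - F j x))\<^sup>2) \<le> 4 * B x" for j
      using AEbound[of j] by simp
  qed auto
  have lg: "l2 L g"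
    unfolding l2_iff
  proof (intro conjI mg)
    have i: "integrable (LM L) (\<lambda>x. 2 * (4 * B x) + 2 * (cmod (F 0 x))\<^sup>2)"
      using iB lF[of 0] by (auto simp: l2_iff)
    show "integrable (LM L) (\<lambda>x. (cmod (g x))\<^sup>2)"
    proof (rule Bochner_Integration.integrable_bound[OF i])
      show "AE x in LM L. norm ((cmod (g x))\<^sup>2) \<le> norm (2 * (4 * B x) + 2 * (cmod (F 0 x))\<^sup>2)"
        using AEbound[of 0]
      proof eventually_elim
        case (elim x)
        have "cmod (g x) \<le> cmod (g x - F 0 x) + cmod (F 0 x)"
          using norm_triangle_ineq[of "g x - F 0 x" "F 0 x"] by simp
        then have "(cmod (g x))\<^sup>2 \<le> (cmod (g x - F 0 x) + cmod (F 0 x))\<^sup>2" by (simp add: power_mono)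
        also have "\<dots> \<le> 2 * (cmod (g x - F 0 x))\<^sup>2 + 2 * (cmod (F 0 x))\<^sup>2" by (rule sq_sum_le)
        also have "\<dots> \<le> 2 * (4 * B x) + 2 * (cmod (F 0 x))\<^sup>2" using elim by simp
        finally show ?case by simp
      qed
    qed measurable
  qed
  have Fg: "(\<lambda>j. nsq L (\<lambda>x. F j x - g x)) \<longlonglongrightarrow> 0"
    using lim0 by (simp add: nsq_def norm_minus_commute)
  show ?thesis
  proof (intro exI[of _ g] conjI allI impI lg)
    fix e :: real assume e: "e > 0"
    obtain N0 where N0: "\<And>m n. m \<ge> N0 \<Longrightarrow> n \<ge> N0 \<Longrightarrow> nsq L (\<lambda>x. f m x - f n x) < e / 4"
      using C[of "e/4"] e by auto
    obtain j0 where j0: "\<And>j. j \<ge> j0 \<Longrightarrow> nsq L (\<lambda>x. F j x - g x) < e / 4"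
      using order_tendstoD(2)[OF Fg, of "e/4"] e by (auto simp: eventually_sequentially)
    define j where "j = max j0 N0"
    have rj: "r j \<ge> N0" using seq_suble[OF rmono, of j] by (simp add: j_def)
    show "\<exists>N. \<forall>n\<ge>N. nsq L (\<lambda>x. f n x - g x) < e"
    proof (intro exI allI impI)
      fix n assume n: "n \<ge> N0"
      have "sqrt (nsq L (\<lambda>x. f n x - g x)) \<le> sqrt (nsq L (\<lambda>x. f n x - F j x)) + sqrt (nsq L (\<lambda>x. F j x - g x))"
        by (rule nsq_triangle_diff[OF l2 lF lg])
      also have "\<dots> < sqrt (e/4) + sqrt (e/4)"
        using N0[OF n rj] j0[of j] by (intro add_strict_mono real_sqrt_less_mono) (auto simp: F_def j_def)
      also have "\<dots> = sqrt e"
        using e by (simp add: real_sqrt_divide)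
      finally have "sqrt (nsq L (\<lambda>x. f n x - g x)) < sqrt e" .
      then show "nsq L (\<lambda>x. f n x - g x) < e" by simp
    qed
  qed
qed



lemma ae_refl: "ae_eq L f f" by (simp add: ae_eq_def)
lemma ae_sym: "ae_eq L f g \<Longrightarrow> ae_eq L g f" by (simp add: ae_eq_AE eq_commute)
lemma ae_trans: "ae_eq L f g \<Longrightarrow> ae_eq L g h \<Longrightarrow> ae_eq L f h"
  unfolding ae_eq_AE by (erule AE_mp, erule AE_mp) auto
lemma ae_lin: "ae_eq L f f' \<Longrightarrow> ae_eq L g g' \<Longrightarrow> ae_eq L (\<lambda>x. a * f x + b * g x) (\<lambda>x. a * f' x + b * g' x)"
  unfolding ae_eq_AE by (erule AE_mp, erule AE_mp) auto
lemma ae_diff_zero: "ae_eq L (\<lambda>x. f x - g x) (\<lambda>x. 0) \<longleftrightarrow> ae_eq L f g"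
  unfolding ae_eq_AE by simp
lemma ae_pointwise: assumes "\<And>x. x \<in> {0..L} \<Longrightarrow> f x = g x" shows "ae_eq L f g"
proof -
  have "{x\<in>{0..L}. f x \<noteq> g x} = {}" using assms by auto
  then show ?thesis unfolding ae_eq_def by (metis negligible_empty)
qed

declare nsq_nonneg[simp]

lemma l2_inner_zero_right: "l2_inner L f (\<lambda>x. 0) = 0"
  by (simp add: l2_inner_def)

lemma orth_zero:
  assumes "l2 L D" "\<And>u. l2 L u \<Longrightarrow> l2_inner L u D = 0"
  shows "ae_eq L D (\<lambda>x. 0)"
proof -
  have "complex_of_real (nsq L D) = 0" using assms(2)[OF assms(1)] l2_inner_self[OF assms(1)] by simp
  then show ?thesis using nsq_zero_iff[OF assms(1)] by simp
qed

lemma nsq_le_zero_ae: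
  assumes "l2 L f" "sqrt (nsq L f) \<le> 0"
  shows "ae_eq L f (\<lambda>x. 0)"
  using assms nsq_zero_iff[OF assms(1)] nsq_nonneg[of L f] by simp

section \<open>Bounded operators\<close>

lemma bop_l2: "bounded_op L P \<Longrightarrow> l2 L f \<Longrightarrow> l2 L (P f)"
  by (simp add: bounded_op_def)

lemma bop_lin: "bounded_op L P \<Longrightarrow> l2 L f \<Longrightarrow> l2 L g \<Longrightarrow>
   ae_eq L (P (\<lambda>x. a * f x + b * g x)) (\<lambda>x. a * P f x + b * P g x)"
  by (simp add: bounded_op_def)

lemma bop_bound:
  assumes "bounded_op L P"
  obtains C where "C \<ge> 0" "\<And>f. l2 L f \<Longrightarrow> sqrt (nsq L (P f)) \<le> C * sqrt (nsq L f)"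
proof -
  obtain C where C: "\<And>f. l2 L f \<Longrightarrow> l2_norm L (P f) \<le> C * l2_norm L f"
    using assms by (auto simp: bounded_op_def)
  show ?thesis
  proof (rule that[of "max C 0"])
    fix f assume f: "l2 L f"
    have "sqrt (nsq L (P f)) \<le> C * sqrt (nsq L f)"
      using C[OF f] by (simp add: l2_norm_nsq f bop_l2[OF assms f])
    also have "\<dots> \<le> max C 0 * sqrt (nsq L f)" by (intro mult_right_mono) auto
    finally show "sqrt (nsq L (P f)) \<le> max C 0 * sqrt (nsq L f)" .
  qed simp
qed

lemma bop_ae:
  assumes P: "bounded_op L P" and f: "l2 L f" and ff: "ae_eq L f f'"
  shows "ae_eq L (P f) (P f')"
proof -
  have f': "l2 L f'" by (rule l2_ae[OF f ff])
  obtain C where C: "C \<ge> 0" "\<And>f. l2 L f \<Longrightarrow> sqrt (nsq L (P f)) \<le> C * sqrt (nsq L f)"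
    using bop_bound[OF P] by blast
  let ?d = "\<lambda>x. 1 * f x + (-1) * f' x"
  have ld: "l2 L ?d" by (rule l2_lin[OF f f'])
  have "ae_eq L ?d (\<lambda>x. 0)" using ff by (simp add: ae_eq_AE)
  then have "nsq L ?d = 0" using nsq_zero_iff[OF ld] by simp
  then have "sqrt (nsq L (P ?d)) \<le> 0" using C(2)[OF ld] by simp
  then have "ae_eq L (P ?d) (\<lambda>x. 0)" by (rule nsq_le_zero_ae[OF bop_l2[OF P ld]])
  moreover have "ae_eq L (P ?d) (\<lambda>x. 1 * P f x + (-1) * P f' x)" by (rule bop_lin[OF P f f'])
  ultimately have "ae_eq L (\<lambda>x. 1 * P f x + (-1) * P f' x) (\<lambda>x. 0)"
    using ae_trans ae_sym by blast
  then show ?thesis by (simp add: ae_eq_AE)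
qed

lemma bop_zero:
  assumes P: "bounded_op L P"
  shows "ae_eq L (P (\<lambda>x. 0)) (\<lambda>x. 0)"
proof -
  obtain C where C: "C \<ge> 0" "\<And>f. l2 L f \<Longrightarrow> sqrt (nsq L (P f)) \<le> C * sqrt (nsq L f)"
    using bop_bound[OF P] by blast
  have "sqrt (nsq L (P (\<lambda>x. 0))) \<le> 0" using C(2)[OF l2_zero] by (simp add: nsq_def)
  then show ?thesis by (rule nsq_le_zero_ae[OF bop_l2[OF P l2_zero]])
qed

section \<open>Adjoint\<close>

lemma adj_l2: "op_adjoint L P Ps \<Longrightarrow> l2 L g \<Longrightarrow> l2 L (Ps g)"
  by (simp add: op_adjoint_def)

lemma adj_eq: "op_adjoint L P Ps \<Longrightarrow> l2 L f \<Longrightarrow> l2 L g \<Longrightarrow> l2_inner L (P f) g = l2_inner L f (Ps g)"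
  by (simp add: op_adjoint_def)

lemma l2_inner_diff_right:
  assumes "l2 L f" "l2 L g" "l2 L u"
  shows "l2_inner L u (\<lambda>x. f x - g x) = l2_inner L u f - l2_inner L u g"
  using l2_inner_lin_right[OF assms, of 1 "-1"] by simp

lemma adj_lin:
  assumes P: "bounded_op L P" and A: "op_adjoint L P Ps" and f: "l2 L f" and g: "l2 L g"
  shows "ae_eq L (Ps (\<lambda>x. a * f x + b * g x)) (\<lambda>x. a * Ps f x + b * Ps g x)"
proof -
  let ?h = "\<lambda>x. a * f x + b * g x"
  have lh: "l2 L ?h" by (rule l2_lin[OF f g])
  have l1: "l2 L (Ps ?h)" by (rule adj_l2[OF A lh])
  have l2': "l2 L (\<lambda>x. a * Ps f x + b * Ps g x)" by (rule l2_lin[OF adj_l2[OF A f] adj_l2[OF A g]])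
  have "ae_eq L (\<lambda>x. Ps ?h x - (a * Ps f x + b * Ps g x)) (\<lambda>x. 0)"
  proof (rule orth_zero)
    show "l2 L (\<lambda>x. Ps ?h x - (a * Ps f x + b * Ps g x))" by (rule l2_diff[OF l1 l2'])
    fix u assume u: "l2 L u"
    have "l2_inner L u (\<lambda>x. Ps ?h x - (a * Ps f x + b * Ps g x))
        = l2_inner L u (Ps ?h) - l2_inner L u (\<lambda>x. a * Ps f x + b * Ps g x)"
      by (rule l2_inner_diff_right[OF l1 l2' u])
    also have "l2_inner L u (Ps ?h) = cnj (l2_inner L (Ps ?h) u)" by (rule l2_inner_cnj[OF l1 u])
    also have "l2_inner L u (\<lambda>x. a * Ps f x + b * Ps g x) = cnj a * l2_inner L u (Ps f) + cnj b * l2_inner L u (Ps g)"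
      by (rule l2_inner_lin_right[OF adj_l2[OF A f] adj_l2[OF A g] u])
    also have "l2_inner L u (Ps f) = l2_inner L (P u) f" by (rule adj_eq[OF A u f, symmetric])
    also have "l2_inner L u (Ps g) = l2_inner L (P u) g" by (rule adj_eq[OF A u g, symmetric])
    also have "l2_inner L (Ps ?h) u = cnj (l2_inner L u (Ps ?h))" by (rule l2_inner_cnj[OF u l1])
    also have "l2_inner L u (Ps ?h) = l2_inner L (P u) ?h" by (rule adj_eq[OF A u lh, symmetric])
    also have "l2_inner L (P u) ?h = cnj a * l2_inner L (P u) f + cnj b * l2_inner L (P u) g"
      by (rule l2_inner_lin_right[OF f g bop_l2[OF P u]])
    finally show "l2_inner L u (\<lambda>x. Ps ?h x - (a * Ps f x + b * Ps g x)) = 0" by simp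
  qed
  then show ?thesis by (simp add: ae_diff_zero)
qed

lemma adj_ae:
  assumes P: "bounded_op L P" and A: "op_adjoint L P Ps" and g: "l2 L g" and gg: "ae_eq L g g'"
  shows "ae_eq L (Ps g) (Ps g')"
proof -
  have g': "l2 L g'" by (rule l2_ae[OF g gg])
  have "ae_eq L (\<lambda>x. Ps g x - Ps g' x) (\<lambda>x. 0)"
  proof (rule orth_zero)
    show "l2 L (\<lambda>x. Ps g x - Ps g' x)" by (rule l2_diff[OF adj_l2[OF A g] adj_l2[OF A g']])
    fix u assume u: "l2 L u"
    have "l2_inner L u (\<lambda>x. Ps g x - Ps g' x) = l2_inner L u (Ps g) - l2_inner L u (Ps g')"
      by (rule l2_inner_diff_right[OF adj_l2[OF A g] adj_l2[OF A g'] u])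
    also have "\<dots> = l2_inner L (P u) g - l2_inner L (P u) g'"
      using adj_eq[OF A u g] adj_eq[OF A u g'] by simp
    also have "l2_inner L (P u) g = l2_inner L (P u) g'" by (rule l2_inner_ae_right[OF gg])
    finally show "l2_inner L u (\<lambda>x. Ps g x - Ps g' x) = 0" by simp
  qed
  then show ?thesis by (simp add: ae_diff_zero)
qed

lemma adj_bound:
  assumes P: "bounded_op L P" and A: "op_adjoint L P Ps"
  obtains C where "C \<ge> 0" "\<And>g. l2 L g \<Longrightarrow> sqrt (nsq L (Ps g)) \<le> C * sqrt (nsq L g)"
proof -
  obtain C where C: "C \<ge> 0" "\<And>f. l2 L f \<Longrightarrow> sqrt (nsq L (P f)) \<le> C * sqrt (nsq L f)"
    using bop_bound[OF P] by blast
  show ?thesis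
  proof (rule that[OF C(1)])
    fix g assume g: "l2 L g"
    have lg: "l2 L (Ps g)" by (rule adj_l2[OF A g])
    have "nsq L (Ps g) = cmod (l2_inner L (Ps g) (Ps g))"
      using l2_inner_self[OF lg] nsq_nonneg[of L "Ps g"] by simp
    also have "l2_inner L (Ps g) (Ps g) = l2_inner L (P (Ps g)) g" by (rule adj_eq[OF A lg g, symmetric])
    also have "cmod \<dots> \<le> sqrt (nsq L (P (Ps g))) * sqrt (nsq L g)" by (rule l2_CS[OF bop_l2[OF P lg] g])
    also have "\<dots> \<le> C * sqrt (nsq L (Ps g)) * sqrt (nsq L g)"
      by (intro mult_right_mono C(2)[OF lg]) simp
    finally have *: "sqrt (nsq L (Ps g)) * sqrt (nsq L (Ps g)) \<le> (C * sqrt (nsq L g)) * sqrt (nsq L (Ps g))"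
      using nsq_nonneg[of L "Ps g"] by (simp add: ac_simps)
    show "sqrt (nsq L (Ps g)) \<le> C * sqrt (nsq L g)"
    proof (cases "sqrt (nsq L (Ps g)) = 0")
      case True then show ?thesis using C(1) by simp
    next
      case False
      then have "sqrt (nsq L (Ps g)) > 0" using nsq_nonneg[of L "Ps g"] by (simp add: order_neq_le_trans)
      with * show ?thesis by (rule mult_right_le_imp_le)
    qed
  qed
qed

lemma adj_below:
  assumes P: "bounded_op L P" and A: "op_adjoint L P Ps" and I: "invertible_op L P"
  obtains C where "C \<ge> 0" "\<And>g. l2 L g \<Longrightarrow> sqrt (nsq L g) \<le> C * sqrt (nsq L (Ps g))"
proof -
  obtain Q where Q: "bounded_op L Q" "\<And>f. l2 L f \<Longrightarrow> ae_eq L (Q (P f)) f \<and> ae_eq L (P (Q f)) f"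
    using I by (auto simp: invertible_op_def)
  obtain C where C: "C \<ge> 0" "\<And>f. l2 L f \<Longrightarrow> sqrt (nsq L (Q f)) \<le> C * sqrt (nsq L f)"
    using bop_bound[OF Q(1)] by blast
  show ?thesis
  proof (rule that[OF C(1)])
    fix g assume g: "l2 L g"
    have lQ: "l2 L (Q g)" by (rule bop_l2[OF Q(1) g])
    have "nsq L g = cmod (l2_inner L g g)"
      using l2_inner_self[OF g] nsq_nonneg[of L g] by simp
    also have "l2_inner L g g = l2_inner L (P (Q g)) g"
      by (rule l2_inner_ae_left[OF ae_sym[OF conjunct2[OF Q(2)[OF g]]]])
    also have "\<dots> = l2_inner L (Q g) (Ps g)" by (rule adj_eq[OF A lQ g])
    also have "cmod \<dots> \<le> sqrt (nsq L (Q g)) * sqrt (nsq L (Ps g))" by (rule l2_CS[OF lQ adj_l2[OF A g]])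
    also have "\<dots> \<le> C * sqrt (nsq L g) * sqrt (nsq L (Ps g))"
      by (intro mult_right_mono C(2)[OF g]) simp
    finally have *: "sqrt (nsq L g) * sqrt (nsq L g) \<le> (C * sqrt (nsq L (Ps g))) * sqrt (nsq L g)"
      using nsq_nonneg[of L g] by (simp add: ac_simps)
    show "sqrt (nsq L g) \<le> C * sqrt (nsq L (Ps g))"
    proof (cases "sqrt (nsq L g) = 0")
      case True then show ?thesis using C(1) by simp
    next
      case False
      then have "sqrt (nsq L g) > 0" using nsq_nonneg[of L g] by (simp add: order_neq_le_trans)
      with * show ?thesis by (rule mult_right_le_imp_le)
    qed
  qed
qed



lemma sq_inv_expand: "(a::real) > 0 \<Longrightarrow> (d + 1/a)\<^sup>2 = d\<^sup>2 + (2*d + 1/a)/a"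
  by (simp add: power2_eq_square field_simps)

lemma adj_diff:
  assumes P: "bounded_op L P" and A: "op_adjoint L P Ps" and f: "l2 L f" and g: "l2 L g"
  shows "ae_eq L (Ps (\<lambda>x. f x - g x)) (\<lambda>x. Ps f x - Ps g x)"
  using adj_lin[OF P A f g, of 1 "-1"] by simp

lemma nsq_parallelogram:
  assumes u: "l2 L u" and v: "l2 L v"
  shows "nsq L (\<lambda>x. u x - v x) + nsq L (\<lambda>x. u x + v x) = 2 * nsq L u + 2 * nsq L v"
proof -
  have mv: "l2 L (\<lambda>x. - v x)" by (rule l2_uminus[OF v])
  have "nsq L (\<lambda>x. u x + - v x) = nsq L u + 2 * Re (l2_inner L u (\<lambda>x. - v x)) + nsq L (\<lambda>x. - v x)"
    by (rule nsq_add_expand[OF u mv])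
  moreover have "l2_inner L u (\<lambda>x. - v x) = - l2_inner L u v"
    using l2_inner_lin_right[OF v v u, of "-1" 0] by simp
  moreover have "nsq L (\<lambda>x. u x + v x) = nsq L u + 2 * Re (l2_inner L u v) + nsq L v"
    by (rule nsq_add_expand[OF u v])
  ultimately show ?thesis by (simp add: nsq_uminus)
qed

lemma sq_le_from_sqrt:
  assumes "sqrt a \<le> C * sqrt b" "0 \<le> a" "0 \<le> b" "0 \<le> C"
  shows "a \<le> C\<^sup>2 * b"
proof -
  have "(sqrt a)\<^sup>2 \<le> (C * sqrt b)\<^sup>2" using assms by (intro power_mono) auto
  then show ?thesis using assms by (simp add: power_mult_distrib)
qed

lemma adj_surj:
  assumes P: "bounded_op L P" and A: "op_adjoint L P Ps" and I: "invertible_op L P"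
    and phi: "l2 L \<phi>"
  shows "\<exists>\<gamma>. l2 L \<gamma> \<and> ae_eq L (Ps \<gamma>) \<phi>"
proof -
  obtain CP where CP: "CP \<ge> 0" "\<And>g. l2 L g \<Longrightarrow> sqrt (nsq L (Ps g)) \<le> CP * sqrt (nsq L g)"
    using adj_bound[OF P A] by blast
  obtain CQ where CQ: "CQ \<ge> 0" "\<And>g. l2 L g \<Longrightarrow> sqrt (nsq L g) \<le> CQ * sqrt (nsq L (Ps g))"
    using adj_below[OF P A I] by blast
  define J where "J \<gamma> = sqrt (nsq L (\<lambda>x. Ps \<gamma> x - \<phi> x))" for \<gamma>
  have J0: "0 \<le> J \<gamma>" for \<gamma> by (simp add: J_def)
  define d where "d = Inf (J ` {\<gamma>. l2 L \<gamma>})"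
  have bdd: "bdd_below (J ` {\<gamma>. l2 L \<gamma>})" by (rule bdd_belowI[of _ 0]) (auto simp: J0)
  have ne: "J ` {\<gamma>. l2 L \<gamma>} \<noteq> {}" using l2_zero by auto
  have dle: "d \<le> J \<gamma>" if "l2 L \<gamma>" for \<gamma>
    unfolding d_def by (rule cInf_lower[OF _ bdd]) (use that in auto)
  have d0: "0 \<le> d" unfolding d_def by (rule cInf_greatest[OF ne]) (auto simp: J0)
  have "\<forall>n. \<exists>\<gamma>. l2 L \<gamma> \<and> J \<gamma> < d + 1 / real (Suc n)"
  proof
    fix n
    have "Inf (J ` {\<gamma>. l2 L \<gamma>}) < d + 1 / real (Suc n)" by (simp add: d_def)
    then show "\<exists>\<gamma>. l2 L \<gamma> \<and> J \<gamma> < d + 1 / real (Suc n)"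
      using cInf_lessD[OF ne] by blast
  qed
  then obtain G where G: "\<And>n. l2 L (G n)" "\<And>n. J (G n) < d + 1 / real (Suc n)" by metis
  have JG2: "(J (G n))\<^sup>2 \<le> d\<^sup>2 + (2 * d + 1) / real (Suc n)" for n
  proof -
    have "(J (G n))\<^sup>2 \<le> (d + 1 / real (Suc n))\<^sup>2" using G(2)[of n] J0 by (intro power_mono) auto
    also have "\<dots> = d\<^sup>2 + (2 * d + 1 / real (Suc n)) / real (Suc n)"
      by (rule sq_inv_expand) simp
    also have "\<dots> \<le> d\<^sup>2 + (2 * d + 1) / real (Suc n)"
      by (intro add_left_mono divide_right_mono) auto
    finally show ?thesis .
  qed
  have nJ: "nsq L (\<lambda>x. Ps \<gamma> x - \<phi> x) = (J \<gamma>)\<^sup>2" for \<gamma> by (simp add: J_def)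
  define K where "K = CQ\<^sup>2 * (2 * (2 * d + 1))"
  have K0: "0 \<le> K" using d0 by (simp add: K_def)
  have cauchy_bound: "nsq L (\<lambda>x. G n x - G m x) \<le> K * (1 / real (Suc n) + 1 / real (Suc m))" for n m
  proof -
    let ?u = "\<lambda>x. Ps (G n) x - \<phi> x" and ?v = "\<lambda>x. Ps (G m) x - \<phi> x"
    have lu: "l2 L ?u" by (rule l2_diff[OF adj_l2[OF A G(1)] phi])
    have lv: "l2 L ?v" by (rule l2_diff[OF adj_l2[OF A G(1)] phi])
    define mid where "mid = (\<lambda>x. (1/2) * G n x + (1/2) * G m x)"
    have lmid: "l2 L mid" unfolding mid_def by (rule l2_lin[OF G(1) G(1)])
    have "ae_eq L (Ps mid) (\<lambda>x. (1/2) * Ps (G n) x + (1/2) * Ps (G m) x)"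
      unfolding mid_def by (rule adj_lin[OF P A G(1) G(1)])
    then have ae1: "ae_eq L (\<lambda>x. 2 * (Ps mid x - \<phi> x)) (\<lambda>x. ?u x + ?v x)"
      unfolding ae_eq_AE by (rule AE_mp) (auto simp: algebra_simps)
    have lm: "l2 L (\<lambda>x. 2 * (Ps mid x - \<phi> x))"
      by (rule l2_scale[OF l2_diff[OF adj_l2[OF A lmid] phi]])
    have "nsq L (\<lambda>x. ?u x + ?v x) = nsq L (\<lambda>x. 2 * (Ps mid x - \<phi> x))"
      by (rule nsq_ae[OF lm ae1, symmetric])
    also have "\<dots> = 4 * (J mid)\<^sup>2"
      unfolding nsq_scale[of L 2 "\<lambda>x. Ps mid x - \<phi> x"] nJ by simp
    finally have uv: "nsq L (\<lambda>x. ?u x + ?v x) \<ge> 4 * d\<^sup>2"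
      using dle[OF lmid] d0 by (simp add: power_mono)
    have "nsq L (\<lambda>x. ?u x - ?v x) = 2 * nsq L ?u + 2 * nsq L ?v - nsq L (\<lambda>x. ?u x + ?v x)"
      using nsq_parallelogram[OF lu lv] by simp
    also have "\<dots> \<le> 2 * (J (G n))\<^sup>2 + 2 * (J (G m))\<^sup>2 - 4 * d\<^sup>2"
      using uv by (simp add: nJ)
    also have "\<dots> \<le> 2 * (2 * d + 1) * (1 / real (Suc n) + 1 / real (Suc m))"
    proof -
      have e: "2 * (2 * d + 1) * (1 / real (Suc n) + 1 / real (Suc m))
          = 2 * ((2 * d + 1) / real (Suc n)) + 2 * ((2 * d + 1) / real (Suc m))"
        by (simp add: distrib_left)
      show ?thesis unfolding e using JG2[of n] JG2[of m] by linarith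
    qed
    finally have 1: "nsq L (\<lambda>x. Ps (G n) x - Ps (G m) x) \<le> 2 * (2 * d + 1) * (1 / real (Suc n) + 1 / real (Suc m))"
      by simp
    have ld: "l2 L (\<lambda>x. G n x - G m x)" by (rule l2_diff[OF G(1) G(1)])
    have "nsq L (\<lambda>x. G n x - G m x) \<le> CQ\<^sup>2 * nsq L (Ps (\<lambda>x. G n x - G m x))"
      by (rule sq_le_from_sqrt[OF CQ(2)[OF ld]]) (use CQ in auto)
    also have "nsq L (Ps (\<lambda>x. G n x - G m x)) = nsq L (\<lambda>x. Ps (G n) x - Ps (G m) x)"
      by (rule nsq_ae[OF adj_l2[OF A ld] adj_diff[OF P A G(1) G(1)]])
    also have "CQ\<^sup>2 * \<dots> \<le> CQ\<^sup>2 * (2 * (2 * d + 1) * (1 / real (Suc n) + 1 / real (Suc m)))"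
      by (rule mult_left_mono[OF 1]) simp
    finally show ?thesis by (simp add: K_def ac_simps)
  qed
  have "\<exists>\<gamma>. l2 L \<gamma> \<and> (\<forall>e>0. \<exists>N. \<forall>n\<ge>N. nsq L (\<lambda>x. G n x - \<gamma> x) < e)"
  proof (rule l2_complete[OF G(1)])
    fix e :: real assume e: "e > 0"
    obtain N :: nat where N: "2 * K / e < real N" using reals_Archimedean2 by blast
    show "\<exists>N. \<forall>m\<ge>N. \<forall>n\<ge>N. nsq L (\<lambda>x. G m x - G n x) < e"
    proof (intro exI allI impI)
      fix m n assume m: "m \<ge> N" and n: "n \<ge> N"
      have "1 / real (Suc m) \<le> 1 / real (Suc N)" "1 / real (Suc n) \<le> 1 / real (Suc N)"
        using m n by (auto simp: frac_le)
      then have "K * (1 / real (Suc m) + 1 / real (Suc n)) \<le> K * (2 / real (Suc N))"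
        using K0 by (intro mult_left_mono) auto
      also have "\<dots> < e"
      proof -
        have "2 * K < e * real N" using N e by (simp add: field_simps)
        also have "\<dots> \<le> e * real (Suc N)" using e by simp
        finally show ?thesis by (simp add: field_simps)
      qed
      finally show "nsq L (\<lambda>x. G m x - G n x) < e" using cauchy_bound[of m n] by simp
    qed
  qed
  then obtain \<gamma> where lg: "l2 L \<gamma>" and conv: "\<And>e. e > 0 \<Longrightarrow> \<exists>N. \<forall>n\<ge>N. nsq L (\<lambda>x. G n x - \<gamma> x) < e"
    by blast
  have convL: "(\<lambda>n. nsq L (\<lambda>x. \<gamma> x - G n x)) \<longlonglongrightarrow> 0"
  proof (rule LIMSEQ_I)
    fix r :: real assume "0 < r"
    then obtain N where "\<forall>n\<ge>N. nsq L (\<lambda>x. G n x - \<gamma> x) < r" using conv by blast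
    then show "\<exists>no. \<forall>n\<ge>no. norm (nsq L (\<lambda>x. \<gamma> x - G n x) - 0) < r"
      by (auto simp: nsq_diff_sym)
  qed
  have Jg_le: "J \<gamma> \<le> CP * sqrt (nsq L (\<lambda>x. \<gamma> x - G n x)) + (d + 1 / real (Suc n))" for n
  proof -
    have "J \<gamma> \<le> sqrt (nsq L (\<lambda>x. Ps \<gamma> x - Ps (G n) x)) + J (G n)"
      unfolding J_def by (rule nsq_triangle_diff[OF adj_l2[OF A lg] adj_l2[OF A G(1)] phi])
    also have "nsq L (\<lambda>x. Ps \<gamma> x - Ps (G n) x) = nsq L (Ps (\<lambda>x. \<gamma> x - G n x))"
      by (rule nsq_ae[OF adj_l2[OF A l2_diff[OF lg G(1)]] adj_diff[OF P A lg G(1)], symmetric])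
    also have "sqrt \<dots> \<le> CP * sqrt (nsq L (\<lambda>x. \<gamma> x - G n x))" by (rule CP(2)[OF l2_diff[OF lg G(1)]])
    finally show ?thesis using G(2)[of n] by simp
  qed
  have "(\<lambda>n. CP * sqrt (nsq L (\<lambda>x. \<gamma> x - G n x)) + (d + inverse (real (Suc n)))) \<longlonglongrightarrow> CP * sqrt 0 + (d + 0)"
    by (intro tendsto_add tendsto_mult tendsto_const tendsto_real_sqrt convL LIMSEQ_inverse_real_of_nat)
  then have lim: "(\<lambda>n. CP * sqrt (nsq L (\<lambda>x. \<gamma> x - G n x)) + (d + inverse (real (Suc n)))) \<longlonglongrightarrow> d"
    by simp
  have "J \<gamma> \<le> d"
    by (rule LIMSEQ_le_const[OF lim]) (use Jg_le in \<open>auto simp: inverse_eq_divide\<close>)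
  then have Jg: "J \<gamma> = d" using dle[OF lg] by simp
  define r where "r = (\<lambda>x. Ps \<gamma> x - \<phi> x)"
  have lr: "l2 L r" unfolding r_def by (rule l2_diff[OF adj_l2[OF A lg] phi])
  have orth: "l2_inner L r (Ps \<eta>) = 0" if le: "l2 L \<eta>" for \<eta>
  proof -
    let ?v = "Ps \<eta>"
    have lv: "l2 L ?v" by (rule adj_l2[OF A le])
    define c where "c = l2_inner L r ?v"
    define K where "K = nsq L ?v"
    have K0: "0 \<le> K" by (simp add: K_def)
    have ineq: "0 \<le> 2 * Re (cnj t * c) + (cmod t)\<^sup>2 * K" for t
    proof -
      have lt: "l2 L (\<lambda>x. \<gamma> x + t * \<eta> x)" using l2_lin[OF lg le, of 1 t] by simp
      have ae: "ae_eq L (Ps (\<lambda>x. \<gamma> x + t * \<eta> x)) (\<lambda>x. Ps \<gamma> x + t * Ps \<eta> x)"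
        using adj_lin[OF P A lg le, of 1 t] by simp
      have ae2: "ae_eq L (\<lambda>x. Ps (\<lambda>x. \<gamma> x + t * \<eta> x) x - \<phi> x) (\<lambda>x. r x + t * ?v x)"
        using ae unfolding ae_eq_AE r_def by (rule AE_mp) auto
      have "(J \<gamma>)\<^sup>2 \<le> (J (\<lambda>x. \<gamma> x + t * \<eta> x))\<^sup>2"
        unfolding Jg by (rule power_mono[OF dle[OF lt] d0])
      also have "\<dots> = nsq L (\<lambda>x. r x + t * ?v x)"
        unfolding nJ[symmetric] by (rule nsq_ae[OF l2_diff[OF adj_l2[OF A lt] phi] ae2])
      also have "\<dots> = nsq L r + 2 * Re (l2_inner L r (\<lambda>x. t * ?v x)) + nsq L (\<lambda>x. t * ?v x)"
        by (rule nsq_add_expand[OF lr l2_scale[OF lv]])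
      also have "l2_inner L r (\<lambda>x. t * ?v x) = cnj t * c"
        using l2_inner_lin_right[OF lv lv lr, of t 0] by (simp add: c_def)
      also have "nsq L (\<lambda>x. t * ?v x) = (cmod t)\<^sup>2 * K" by (simp add: nsq_scale K_def)
      finally show ?thesis using nJ[of \<gamma>] by (simp add: r_def)
    qed
    define s where "s = 1 / (K + 1)"
    have s0: "0 < s" using K0 by (simp add: s_def)
    have "0 \<le> 2 * Re (cnj (- (complex_of_real s * c)) * c) + (cmod (- (complex_of_real s * c)))\<^sup>2 * K"
      by (rule ineq)
    also have "cnj (- (complex_of_real s * c)) * c = - complex_of_real (s * (cmod c)\<^sup>2)"
    proof -
      have cc: "cnj c * c = complex_of_real ((cmod c)\<^sup>2)" by (simp only: complex_norm_square mult.commute)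
      have "cnj (- (complex_of_real s * c)) * c = - (complex_of_real s * (cnj c * c))" by simp
      also have "\<dots> = - complex_of_real (s * (cmod c)\<^sup>2)" unfolding cc by simp
      finally show ?thesis .
    qed
    also have "(cmod (- (complex_of_real s * c)))\<^sup>2 = s\<^sup>2 * (cmod c)\<^sup>2"
      by (simp add: norm_mult power_mult_distrib abs_of_pos s0)
    finally have "0 \<le> - 2 * (s * (cmod c)\<^sup>2) + s\<^sup>2 * (cmod c)\<^sup>2 * K" by simp
    then have "0 \<le> (cmod c)\<^sup>2 * (s * (s * K - 2))" by (simp add: power2_eq_square algebra_simps)
    moreover have "s * K < 2" using K0 by (simp add: s_def field_simps)
    ultimately have "(cmod c)\<^sup>2 \<le> 0"
      using s0 by (smt (verit, best) mult_nonneg_nonneg mult_pos_neg zero_le_power2 mult_neg_pos)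
    then show ?thesis by (simp add: c_def)
  qed
  have "l2_inner L (P r) (P r) = 0"
    using orth[OF bop_l2[OF P lr]] adj_eq[OF A lr bop_l2[OF P lr]] by simp
  then have "nsq L (P r) = 0" using l2_inner_self[OF bop_l2[OF P lr]] by simp
  then have Pr0: "ae_eq L (P r) (\<lambda>x. 0)" using nsq_zero_iff[OF bop_l2[OF P lr]] by simp
  obtain Q where Q: "bounded_op L Q" "\<And>f. l2 L f \<Longrightarrow> ae_eq L (Q (P f)) f \<and> ae_eq L (P (Q f)) f"
    using I by (auto simp: invertible_op_def)
  have "ae_eq L r (Q (P r))" using Q(2)[OF lr] by (simp add: ae_sym)
  also have "ae_eq L (Q (P r)) (Q (\<lambda>x. 0))" by (rule bop_ae[OF Q(1) bop_l2[OF P lr] Pr0])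
  then have "ae_eq L r (Q (\<lambda>x. 0))" using calculation ae_trans by blast
  then have "ae_eq L r (\<lambda>x. 0)" using bop_zero[OF Q(1)] ae_trans by blast
  then have "ae_eq L (Ps \<gamma>) \<phi>" unfolding r_def by (simp add: ae_diff_zero)
  then show ?thesis using lg by blast
qed



lemma l2_continuous:
  assumes "continuous_on {0..L} z"
  shows "l2 L z"
  unfolding l2_def
proof
  show "z measurable_on {0..L}"
    using measurable_on_iff_borel_measurable[of "{0..L}" z]
      continuous_imp_measurable_on_sets_lebesgue[OF assms] by simp
  show "(\<lambda>x. (cmod (z x))\<^sup>2) integrable_on {0..L}"
    by (intro integrable_continuous_interval continuous_intros assms)
qed

lemma l2_integrable_on:
  assumes "l2 L h"
  shows "h integrable_on {0..L}"
proof -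
  have "h absolutely_integrable_on {0..L}"
  proof (rule measurable_bounded_by_integrable_imp_absolutely_integrable)
    show "h \<in> borel_measurable (LM L)" using assms by (simp add: l2_iff)
    show "(\<lambda>x. 1 + (cmod (h x))\<^sup>2) integrable_on {0..L}"
      using assms by (intro integrable_add) (auto simp: l2_def)
    fix x
    have "0 \<le> (cmod (h x) - 1/2)\<^sup>2" by simp
    then show "norm (h x) \<le> 1 + (cmod (h x))\<^sup>2" by (simp add: power2_eq_square algebra_simps)
  qed simp
  then show ?thesis using set_lebesgue_integral_eq_integral(1) by blast
qed

lemma DAs_cont:
  assumes "in_DAs L z h"
  shows "continuous_on {0..L} z"
proof -
  have "continuous_on {0..L} (\<lambda>x. integral {0..x} h)"
    by (rule indefinite_integral_continuous_1[OF l2_integrable_on]) (use assms in \<open>simp add: in_DAs_def\<close>)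
  then show ?thesis
    by (rule continuous_on_cong[THEN iffD1, rotated 2]) (use assms in \<open>auto simp: in_DAs_def\<close>)
qed

lemma DAs_l2: "in_DAs L z h \<Longrightarrow> l2 L z"
  by (rule l2_continuous[OF DAs_cont])

lemma DAs_h: "in_DAs L z h \<Longrightarrow> l2 L h"
  by (simp add: in_DAs_def)

lemma DAs_comb:
  assumes "in_DAs L z1 h1" "in_DAs L z0 h0"
  shows "in_DAs L (\<lambda>x. z1 x - c * z0 x) (\<lambda>x. h1 x - c * h0 x)"
  unfolding in_DAs_def
proof (intro conjI ballI)
  show "l2 L (\<lambda>x. h1 x - c * h0 x)"
    using l2_lin[OF DAs_h[OF assms(1)] DAs_h[OF assms(2)], of 1 "-c"] by simp
  fix x assume x: "x \<in> {0..L}"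
  have i1: "h1 integrable_on {0..x}"
    by (rule integrable_on_subinterval[OF l2_integrable_on[OF DAs_h[OF assms(1)]]]) (use x in auto)
  have i0: "h0 integrable_on {0..x}"
    by (rule integrable_on_subinterval[OF l2_integrable_on[OF DAs_h[OF assms(2)]]]) (use x in auto)
  have "integral {0..x} (\<lambda>x. h1 x - c * h0 x) = integral {0..x} h1 - c * integral {0..x} h0"
    using i1 i0 by (subst integral_diff) (auto intro: integrable_on_mult_right)
  then show "z1 x - c * z0 x = integral {0..x} (\<lambda>x. h1 x - c * h0 x)"
    using assms x by (simp add: in_DAs_def)
qed

lemma DAs_z0:
  assumes L: "L > 0"
  shows "in_DAs L (\<lambda>x. complex_of_real (x / L)) (\<lambda>x. complex_of_real (1 / L))"
  unfolding in_DAs_def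
proof (intro conjI ballI)
  show "l2 L (\<lambda>x. complex_of_real (1 / L))" by (rule l2_continuous) (intro continuous_intros)
  fix x assume "x \<in> {0..L}"
  then show "complex_of_real (x / L) = integral {0..x} (\<lambda>x. complex_of_real (1 / L))"
    by (simp add: scaleR_conv_of_real)
qed



lemma borel_measurable_cnj_compose[measurable]:
  fixes f :: "'a \<Rightarrow> complex"
  shows "f \<in> borel_measurable M \<Longrightarrow> (\<lambda>x. cnj (f x)) \<in> borel_measurable M"
  unfolding borel_measurable_complex_iff by simp

lemma borel_LM:
  fixes F :: "real \<Rightarrow> 'b::topological_space"
  assumes "F \<in> borel_measurable lborel"
  shows "F \<in> borel_measurable (LM L)"
  using assms by (intro measurable_restrict_space1 measurable_completion) simp

lemma LM_integral_lborel:
  fixes F :: "real \<Rightarrow> 'b::{banach, second_countable_topology}"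
  assumes "F \<in> borel_measurable lborel"
  shows "integral\<^sup>L (LM L) F = integral\<^sup>L lborel (\<lambda>y. indicator {0..L} y *\<^sub>R F y)"
proof -
  have "integral\<^sup>L (LM L) F = integral\<^sup>L lebesgue (\<lambda>y. indicator {0..L} y *\<^sub>R F y)"
    by (rule integral_restrict_space) simp
  also have "\<dots> = integral\<^sup>L lborel (\<lambda>y. indicator {0..L} y *\<^sub>R F y)"
    by (rule integral_completion) (use assms in simp)
  finally show ?thesis .
qed

lemma LM_integrable_lborel:
  fixes F :: "real \<Rightarrow> 'b::{banach, second_countable_topology}"
  assumes "F \<in> borel_measurable lborel"
  shows "integrable (LM L) F \<longleftrightarrow> integrable lborel (\<lambda>y. indicator {0..L} y *\<^sub>R F y)"
proof -
  have "integrable (LM L) F \<longleftrightarrow> integrable lebesgue (\<lambda>y. indicator {0..L} y *\<^sub>R F y)"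
    by (rule integrable_restrict_space) simp
  also have "\<dots> \<longleftrightarrow> integrable lborel (\<lambda>y. indicator {0..L} y *\<^sub>R F y)"
    by (rule integrable_completion) (use assms in simp)
  finally show ?thesis .
qed

lemma AE_lborel_negl:
  assumes "AE x in lborel. P x"
  shows "negligible {x\<in>{0..L::real}. \<not> P x}"
proof -
  have "AE x in lebesgue. P x" by (rule AE_completion[OF assms])
  then have "{x\<in>space lebesgue. \<not> P x} \<in> null_sets lebesgue"
    by (simp add: completion.AE_iff_null_sets)
  then have "negligible {x. \<not> P x}" by (simp add: negligible_iff_null_sets)
  then show ?thesis by (rule negligible_subset) auto
qed

lemma l2sq_borel:
  fixes g :: "real \<times> real \<Rightarrow> complex"
  assumes g: "l2sq L g"
  obtains g1 where "g1 \<in> borel_measurable (lborel \<Otimes>\<^sub>M lborel)"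
    "AE p in lborel \<Otimes>\<^sub>M lborel. (if p \<in> {0..L} \<times> {0..L} then g p else 0) = g1 p"
    "integrable (lborel \<Otimes>\<^sub>M lborel) (\<lambda>p. (cmod (g1 p))\<^sup>2)"
proof -
  define S where "S = {0..L} \<times> {0..L::real}"
  define g0 where "g0 p = (if p \<in> S then g p else 0)" for p
  have Sb: "S \<in> sets borel" unfolding S_def by (intro borel_closed closed_Times) auto
  then have Sl: "S \<in> sets lebesgue" by simp
  have "g \<in> borel_measurable (lebesgue_on S)"
    using g measurable_on_iff_borel_measurable[OF Sl, of g] by (simp add: l2sq_def S_def)
  then have mg0[measurable]: "g0 \<in> borel_measurable lebesgue"
    unfolding g0_def using borel_measurable_if[OF Sl] by blast
  have "(\<lambda>p. Re (g0 p)) \<in> borel_measurable (completion lborel)" using mg0 by measurable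
  then obtain r1 where r1: "r1 \<in> borel_measurable lborel" "AE p in lborel. Re (g0 p) = r1 p"
    using completion_ex_borel_measurable_real by blast
  have "(\<lambda>p. Im (g0 p)) \<in> borel_measurable (completion lborel)" using mg0 by measurable
  then obtain i1 where i1: "i1 \<in> borel_measurable lborel" "AE p in lborel. Im (g0 p) = i1 p"
    using completion_ex_borel_measurable_real by blast
  define g1 where "g1 p = Complex (r1 p) (i1 p)" for p
  have mg1[measurable]: "g1 \<in> borel_measurable lborel"
    unfolding borel_measurable_complex_iff g1_def using r1(1) i1(1) by simp
  have mg1'[measurable]: "g1 \<in> borel_measurable lebesgue"
    using mg1 by (intro measurable_completion) simp
  have ae: "AE p in lborel. g0 p = g1 p"
    using r1(2) i1(2) by eventually_elim (simp add: g1_def complex_eq_iff)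
  have "(\<lambda>p. (cmod (g p))\<^sup>2) integrable_on S" using g by (simp add: l2sq_def S_def)
  then have "(\<lambda>p. (cmod (g p))\<^sup>2) absolutely_integrable_on S"
    by (rule nonnegative_absolutely_integrable_1) auto
  then have "integrable (lebesgue_on S) (\<lambda>p. (cmod (g p))\<^sup>2)"
    using absolutely_integrable_measurable_real[OF Sl] by (simp add: abs_of_nonneg)
  then have "integrable lebesgue (\<lambda>p. indicator S p *\<^sub>R (cmod (g p))\<^sup>2)"
    by (subst integrable_restrict_space[symmetric]) (auto simp: Sl)
  also have "(\<lambda>p. indicator S p *\<^sub>R (cmod (g p))\<^sup>2) = (\<lambda>p. (cmod (g0 p))\<^sup>2)"
    by (auto simp: g0_def indicator_def)
  finally have i0: "integrable lebesgue (\<lambda>p. (cmod (g0 p))\<^sup>2)" .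
  have "integrable lebesgue (\<lambda>p. (cmod (g1 p))\<^sup>2)"
  proof (subst integrable_cong_AE[symmetric])
    show "(\<lambda>p. (cmod (g0 p))\<^sup>2) \<in> borel_measurable lebesgue" using mg0 by measurable
    show "(\<lambda>p. (cmod (g1 p))\<^sup>2) \<in> borel_measurable lebesgue" using mg1 by measurable
    show "AE x in lebesgue. (cmod (g0 x))\<^sup>2 = (cmod (g1 x))\<^sup>2"
      using AE_completion[OF ae] by eventually_elim simp
  qed (rule i0)
  then have i1': "integrable lborel (\<lambda>p. (cmod (g1 p))\<^sup>2)"
    by (subst integrable_completion[symmetric]) (use mg1 in auto)
  show ?thesis
  proof (rule that[of g1])
    show "g1 \<in> borel_measurable (lborel \<Otimes>\<^sub>M lborel)" using mg1 by (simp add: lborel_prod)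
    show "AE p in lborel \<Otimes>\<^sub>M lborel. (if p \<in> {0..L} \<times> {0..L} then g p else 0) = g1 p"
      using ae unfolding lborel_prod g0_def S_def .
    show "integrable (lborel \<Otimes>\<^sub>M lborel) (\<lambda>p. (cmod (g1 p))\<^sup>2)"
      using i1' by (simp add: lborel_prod)
  qed
qed

lemma HS:
  fixes g :: "real \<times> real \<Rightarrow> complex"
  assumes g: "l2sq L g"
  obtains Good where "negligible {x\<in>{0..L}. \<not> Good x}"
    and "\<And>x. Good x \<Longrightarrow> l2 L (\<lambda>y. g (y, x))"
    and "\<And>z :: real \<Rightarrow> complex. continuous_on {0..L} z \<Longrightarrow> l2 L (\<lambda>x. integral {0..L} (\<lambda>y. cnj (g (y, x)) * z y))"
proof -
  obtain g1 where m1[measurable]: "g1 \<in> borel_measurable (lborel \<Otimes>\<^sub>M lborel)"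
    and ae1: "AE p in lborel \<Otimes>\<^sub>M lborel. (if p \<in> {0..L} \<times> {0..L} then g p else 0) = g1 p"
    and i1: "integrable (lborel \<Otimes>\<^sub>M lborel) (\<lambda>p. (cmod (g1 p))\<^sup>2)"
    using l2sq_borel[OF g] by blast
  define G2 where "G2 x = (\<integral>\<^sup>+y. ennreal ((cmod (g1 (y, x)))\<^sup>2) \<partial>lborel)" for x
  have mG2[measurable]: "G2 \<in> borel_measurable lborel" unfolding G2_def by measurable
  have "(\<integral>\<^sup>+x. G2 x \<partial>lborel) = (\<integral>\<^sup>+p. ennreal ((cmod (g1 p))\<^sup>2) \<partial>(lborel \<Otimes>\<^sub>M lborel))"
    unfolding G2_def by (rule lborel_pair.nn_integral_snd) measurable
  also have "\<dots> = ennreal (integral\<^sup>L (lborel \<Otimes>\<^sub>M lborel) (\<lambda>p. (cmod (g1 p))\<^sup>2))"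
    by (rule nn_integral_eq_integral[OF i1]) simp
  finally have G2fin: "(\<integral>\<^sup>+x. G2 x \<partial>lborel) \<noteq> \<infinity>" by simp
  have AEG2: "AE x in lborel. G2 x \<noteq> \<infinity>" by (rule nn_integral_PInf_AE[OF mG2 G2fin])
  obtain N where N: "{p \<in> space (lborel \<Otimes>\<^sub>M lborel). \<not> ((if p \<in> {0..L} \<times> {0..L} then g p else 0) = g1 p)} \<subseteq> N"
    "emeasure (lborel \<Otimes>\<^sub>M lborel) N = 0" "N \<in> sets (lborel \<Otimes>\<^sub>M lborel)"
    using ae1 by (rule AE_E)
  have "AE p in lborel \<Otimes>\<^sub>M lborel. p \<notin> N"
    by (rule AE_I'[of N]) (use N in auto)
  then have "AE y in lborel. AE x in lborel. (y, x) \<notin> N"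
    by (rule lborel_pair.AE_pair)
  then have AEN: "AE x in lborel. AE y in lborel. (y, x) \<notin> N"
  proof (subst lborel_pair.AE_commute[symmetric])
    have "{p \<in> space (lborel \<Otimes>\<^sub>M lborel). (fst p, snd p) \<notin> N} = space (lborel \<Otimes>\<^sub>M lborel) - N"
      by auto
    then show "{p \<in> space (lborel \<Otimes>\<^sub>M lborel). (fst p, snd p) \<notin> N} \<in> sets (lborel \<Otimes>\<^sub>M lborel)"
      using sets.compl_sets[OF N(3)] by metis
  qed
  define Good where "Good x \<longleftrightarrow> x \<in> {0..L} \<and> G2 x \<noteq> \<infinity> \<and> (AE y in lborel. (y, x) \<notin> N)" for x
  have "AE x in lborel. G2 x \<noteq> \<infinity> \<and> (AE y in lborel. (y, x) \<notin> N)"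
    using AEG2 AEN by eventually_elim auto
  then have negl: "negligible {x\<in>{0..L}. \<not> Good x}"
  proof -
    assume a: "AE x in lborel. G2 x \<noteq> \<infinity> \<and> (AE y in lborel. (y, x) \<notin> N)"
    have eq: "{x\<in>{0..L}. \<not> Good x} = {x\<in>{0..L}. \<not> (G2 x \<noteq> \<infinity> \<and> (AE y in lborel. (y, x) \<notin> N))}"
      by (auto simp: Good_def)
    show ?thesis unfolding eq by (rule AE_lborel_negl[OF a])
  qed
  have sec: "l2 L (\<lambda>y. g1 (y, x)) \<and> ae_eq L (\<lambda>y. g1 (y, x)) (\<lambda>y. g (y, x)) \<and> nsq L (\<lambda>y. g1 (y, x)) \<le> enn2real (G2 x)"
    if gx: "Good x" for x
  proof (intro conjI)
    have ms[measurable]: "(\<lambda>y. g1 (y, x)) \<in> borel_measurable lborel" by measurable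
    have isq: "integrable lborel (\<lambda>y. (cmod (g1 (y, x)))\<^sup>2)"
    proof (rule integrableI_nonneg)
      show "(\<integral>\<^sup>+y. ennreal ((cmod (g1 (y, x)))\<^sup>2) \<partial>lborel) < \<infinity>"
        using gx by (simp add: Good_def G2_def[symmetric] less_top)
    qed auto
    show l: "l2 L (\<lambda>y. g1 (y, x))"
      unfolding l2_iff
    proof
      show "(\<lambda>y. g1 (y, x)) \<in> borel_measurable (LM L)" by (rule borel_LM) measurable
      show "integrable (LM L) (\<lambda>y. (cmod (g1 (y, x)))\<^sup>2)"
        by (subst LM_integrable_lborel) (use integrable_mult_indicator[OF _ isq, of "{0..L}"] in auto)
    qed
    show "ae_eq L (\<lambda>y. g1 (y, x)) (\<lambda>y. g (y, x))"
      unfolding ae_eq_def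
    proof (rule negligible_subset)
      show "negligible {y\<in>{0..L}. \<not> (y, x) \<notin> N}"
        by (rule AE_lborel_negl) (use gx in \<open>simp add: Good_def\<close>)
      show "{y \<in> {0..L}. g1 (y, x) \<noteq> g (y, x)} \<subseteq> {y\<in>{0..L}. \<not> (y, x) \<notin> N}"
      proof (rule subsetI)
        fix y assume y: "y \<in> {y \<in> {0..L}. g1 (y, x) \<noteq> g (y, x)}"
        have "(y, x) \<in> {p \<in> space (lborel \<Otimes>\<^sub>M lborel). \<not> ((if p \<in> {0..L} \<times> {0..L} then g p else 0) = g1 p)}"
          using y gx by (auto simp: Good_def space_pair_measure)
        then have "(y, x) \<in> N" using N(1) by blast
        then show "y \<in> {y\<in>{0..L}. \<not> (y, x) \<notin> N}" using y by simp
      qed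
    qed
    have "nsq L (\<lambda>y. g1 (y, x)) = integral\<^sup>L lborel (\<lambda>y. indicator {0..L} y *\<^sub>R (cmod (g1 (y, x)))\<^sup>2)"
      unfolding nsq_def by (rule LM_integral_lborel) measurable
    also have "\<dots> \<le> integral\<^sup>L lborel (\<lambda>y. (cmod (g1 (y, x)))\<^sup>2)"
      by (rule integral_mono[OF integrable_mult_indicator[OF _ isq] isq]) (auto simp: indicator_def)
    also have "\<dots> = enn2real (G2 x)"
      unfolding G2_def by (rule integral_eq_nn_integral) auto
    finally show "nsq L (\<lambda>y. g1 (y, x)) \<le> enn2real (G2 x)" .
  qed
  show ?thesis
  proof (rule that[OF negl])
    fix x assume "Good x"
    then show "l2 L (\<lambda>y. g (y, x))" using sec l2_ae by blast
  next
    fix z :: "real \<Rightarrow> complex" assume zc: "continuous_on {0..L} z"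
    define zt where "zt y = indicator {0..L} y *\<^sub>R z y" for y
    have mzt[measurable]: "zt \<in> borel_measurable lborel"
      using borel_measurable_continuous_on_indicator[OF _ zc] unfolding zt_def by simp
    have lz: "l2 L z" by (rule l2_continuous[OF zc])
    define T1 where "T1 x = integral\<^sup>L lborel (\<lambda>y. zt y * cnj (g1 (y, x)))" for x
    have mT1[measurable]: "T1 \<in> borel_measurable lborel" unfolding T1_def by measurable
    define T where "T x = integral {0..L} (\<lambda>y. cnj (g (y, x)) * z y)" for x
    have TT1: "T x = T1 x \<and> cmod (T x) \<le> sqrt (nsq L z) * sqrt (enn2real (G2 x))" if gx: "Good x" for x
    proof
      note s = sec[OF gx]
      have "T x = l2_inner L z (\<lambda>y. g (y, x))" by (simp add: T_def l2_inner_def mult.commute)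
      also have "\<dots> = l2_inner L z (\<lambda>y. g1 (y, x))" by (rule l2_inner_ae_right[OF ae_sym]) (use s in blast)
      finally have Ti: "T x = l2_inner L z (\<lambda>y. g1 (y, x))" .
      also have "\<dots> = integral\<^sup>L (LM L) (\<lambda>y. z y * cnj (g1 (y, x)))" by (rule l2_inner_LM[OF lz]) (use s in blast)
      also have "\<dots> = integral\<^sup>L (LM L) (\<lambda>y. zt y * cnj (g1 (y, x)))"
        by (rule Bochner_Integration.integral_cong) (auto simp: zt_def)
      also have "\<dots> = integral\<^sup>L lborel (\<lambda>y. indicator {0..L} y *\<^sub>R (zt y * cnj (g1 (y, x))))"
        by (rule LM_integral_lborel) measurable
      also have "\<dots> = T1 x" unfolding T1_def
        by (rule Bochner_Integration.integral_cong) (auto simp: zt_def indicator_def)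
      finally show "T x = T1 x" .
      have "cmod (T x) \<le> sqrt (nsq L z) * sqrt (nsq L (\<lambda>y. g1 (y, x)))"
        unfolding Ti by (rule l2_CS[OF lz]) (use s in blast)
      also have "\<dots> \<le> sqrt (nsq L z) * sqrt (enn2real (G2 x))"
        using s by (intro mult_left_mono real_sqrt_le_mono) auto
      finally show "cmod (T x) \<le> sqrt (nsq L z) * sqrt (enn2real (G2 x))" .
    qed
    have iGl: "integrable lborel (\<lambda>x. enn2real (G2 x))"
    proof (rule integrableI_nonneg)
      have "(\<integral>\<^sup>+x. ennreal (enn2real (G2 x)) \<partial>lborel) \<le> (\<integral>\<^sup>+x. G2 x \<partial>lborel)"
        by (rule nn_integral_mono) (simp add: ennreal_enn2real_if)
      then show "(\<integral>\<^sup>+x. ennreal (enn2real (G2 x)) \<partial>lborel) < \<infinity>"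
        using G2fin by (simp add: less_top order_le_less_trans)
    qed auto
    have iG: "integrable (LM L) (\<lambda>x. nsq L z * enn2real (G2 x))"
    proof -
      have "integrable (LM L) (\<lambda>x. enn2real (G2 x))"
        by (subst LM_integrable_lborel) (use integrable_mult_indicator[OF _ iGl, of "{0..L}"] in auto)
      then show ?thesis by simp
    qed
    have lT1: "l2 L T1"
      unfolding l2_iff
    proof
      show mm: "T1 \<in> borel_measurable (LM L)" by (rule borel_LM[OF mT1])
      show "integrable (LM L) (\<lambda>x. (cmod (T1 x))\<^sup>2)"
      proof (rule Bochner_Integration.integrable_bound[OF iG])
        show "(\<lambda>x. (cmod (T1 x))\<^sup>2) \<in> borel_measurable (LM L)" using mm by measurable
        show "AE x in LM L. norm ((cmod (T1 x))\<^sup>2) \<le> norm (nsq L z * enn2real (G2 x))"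
          unfolding AE_LM_iff
        proof (rule negligible_subset[OF negl])
          show "{x \<in> {0..L}. \<not> norm ((cmod (T1 x))\<^sup>2) \<le> norm (nsq L z * enn2real (G2 x))} \<subseteq> {x \<in> {0..L}. \<not> Good x}"
          proof (rule subsetI, rule ccontr)
            fix x assume x: "x \<in> {x \<in> {0..L}. \<not> norm ((cmod (T1 x))\<^sup>2) \<le> norm (nsq L z * enn2real (G2 x))}"
              and nx: "x \<notin> {x \<in> {0..L}. \<not> Good x}"
            then have gx: "Good x" by auto
            have "(cmod (T1 x))\<^sup>2 \<le> (sqrt (nsq L z) * sqrt (enn2real (G2 x)))\<^sup>2"
              using TT1[OF gx] by (intro power_mono) auto
            also have "\<dots> = nsq L z * enn2real (G2 x)" by (simp add: power_mult_distrib)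
            finally show False using x by simp
          qed
        qed
      qed
    qed
    have "ae_eq L T1 T"
      unfolding ae_eq_def
      by (rule negligible_subset[OF negl]) (use TT1 in auto)
    then have "l2 L T" by (rule l2_ae[OF lT1])
    then show "l2 L (\<lambda>x. integral {0..L} (\<lambda>y. cnj (g (y, x)) * z y))"
      unfolding T_def .
  qed
qed



lemma adj_zero:
  assumes P: "bounded_op L P" and A: "op_adjoint L P Ps"
  shows "ae_eq L (Ps (\<lambda>x. 0)) (\<lambda>x. 0)"
  using adj_lin[OF P A l2_zero l2_zero, of 0 0] by simp

lemma Astar_l2:
  assumes g: "l2sq L g" and z: "in_DAs L z h"
  shows "l2 L (Astar L g z h)"
proof -
  obtain Good where "negligible {x\<in>{0..L}. \<not> Good x}"
    and "\<And>x. Good x \<Longrightarrow> l2 L (\<lambda>y. g (y, x))"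
    and T: "\<And>z :: real \<Rightarrow> complex. continuous_on {0..L} z \<Longrightarrow> l2 L (\<lambda>x. integral {0..L} (\<lambda>y. cnj (g (y, x)) * z y))"
    using HS[OF g] by blast
  have "l2 L (\<lambda>x. - h x + integral {0..L} (\<lambda>y. cnj (g (y, x)) * z y))"
    using l2_add[OF l2_uminus[OF DAs_h[OF z]] T[OF DAs_cont[OF z]]] by simp
  then show ?thesis by (simp add: Astar_def)
qed

lemma Astar_lin:
  assumes g: "l2sq L g" and z: "in_DAs L z h" and z0: "in_DAs L z0 h0"
  shows "ae_eq L (Astar L g (\<lambda>x. z x - c * z0 x) (\<lambda>x. h x - c * h0 x))
                 (\<lambda>x. Astar L g z h x - c * Astar L g z0 h0 x)"
proof -
  obtain Good where negl: "negligible {x\<in>{0..L}. \<not> Good x}"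
    and sec: "\<And>x. Good x \<Longrightarrow> l2 L (\<lambda>y. g (y, x))"
    using HS[OF g] by blast
  have lz: "l2 L z" "l2 L z0" using DAs_l2 z z0 by auto
  have eq: "integral {0..L} (\<lambda>y. cnj (g (y, x)) * (z y - c * z0 y))
      = integral {0..L} (\<lambda>y. cnj (g (y, x)) * z y) - c * integral {0..L} (\<lambda>y. cnj (g (y, x)) * z0 y)"
    if gx: "Good x" for x
  proof -
    have e: "integral {0..L} (\<lambda>y. cnj (g (y, x)) * u y) = l2_inner L u (\<lambda>y. g (y, x))" for u
      by (simp add: l2_inner_def mult.commute)
    show ?thesis
      using l2_inner_lin_left[OF lz(1) lz(2) sec[OF gx], of 1 "-c"] unfolding e by simp
  qed
  show ?thesis
    unfolding ae_eq_def
    by (rule negligible_subset[OF negl]) (auto simp: Astar_def eq, auto simp: algebra_simps)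
qed

theorem proposition2:
  fixes L :: real and g :: "real \<times> real \<Rightarrow> complex"
    and P Ps :: "(real \<Rightarrow> complex) \<Rightarrow> (real \<Rightarrow> complex)"
  assumes "L > 0"
    and "l2sq L g"
    and "bounded_op L P"
    and "op_adjoint L P Ps"
    and "invertible_op L P"
    and "\<forall>z h. in_DAs L z h \<longrightarrow> (\<exists>w k. in_DAs L w k \<and> ae_eq L (Ps z) w)"
  shows "(\<exists>\<Gamma> \<Gamma>s. bounded_form L \<Gamma> \<and> form_adjoint L \<Gamma> \<Gamma>s \<and>
            (\<forall>z h w k. in_DAs L z h \<and> in_DAs L w k \<and> ae_eq L (Ps z) w \<longrightarrow>
               ae_eq L (\<lambda>x. - k x) (\<lambda>x. Ps (Astar L g z h) x + Ps (\<Gamma>s (z L)) x)))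
         \<longleftrightarrow>
         (\<forall>z h w k. in_DAs L z h \<and> z L = 0 \<and> in_DAs L w k \<and> ae_eq L (Ps z) w \<longrightarrow>
               ae_eq L (\<lambda>x. - k x - Ps (Astar L g z h) x) (\<lambda>x. 0))"
proof -
  note Lp = assms(1) and g = assms(2) and P = assms(3) and A = assms(4) and I = assms(5) and inv = assms(6)
  show ?thesis
  proof
    assume "\<exists>\<Gamma> \<Gamma>s. bounded_form L \<Gamma> \<and> form_adjoint L \<Gamma> \<Gamma>s \<and>
            (\<forall>z h w k. in_DAs L z h \<and> in_DAs L w k \<and> ae_eq L (Ps z) w \<longrightarrow>
               ae_eq L (\<lambda>x. - k x) (\<lambda>x. Ps (Astar L g z h) x + Ps (\<Gamma>s (z L)) x))"
    then obtain \<Gamma> \<Gamma>s where fa: "form_adjoint L \<Gamma> \<Gamma>s"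
      and H: "\<And>z h w k. in_DAs L z h \<Longrightarrow> in_DAs L w k \<Longrightarrow> ae_eq L (Ps z) w \<Longrightarrow>
               ae_eq L (\<lambda>x. - k x) (\<lambda>x. Ps (Astar L g z h) x + Ps (\<Gamma>s (z L)) x)"
      by blast
    have l0: "l2 L (\<Gamma>s 0)" using fa by (simp add: form_adjoint_def)
    have "l2_inner L (\<Gamma>s 0) (\<Gamma>s 0) = 0"
      using fa l0 unfolding form_adjoint_def by (metis complex_cnj_zero mult_zero_right)
    then have "nsq L (\<Gamma>s 0) = 0" using l2_inner_self[OF l0] by simp
    then have "ae_eq L (\<Gamma>s 0) (\<lambda>x. 0)" using nsq_zero_iff[OF l0] by simp
    then have "ae_eq L (Ps (\<Gamma>s 0)) (Ps (\<lambda>x. 0))" by (rule adj_ae[OF P A l0])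
    then have G0: "ae_eq L (Ps (\<Gamma>s 0)) (\<lambda>x. 0)" using adj_zero[OF P A] ae_trans by blast
    show "\<forall>z h w k. in_DAs L z h \<and> z L = 0 \<and> in_DAs L w k \<and> ae_eq L (Ps z) w \<longrightarrow>
               ae_eq L (\<lambda>x. - k x - Ps (Astar L g z h) x) (\<lambda>x. 0)"
    proof (intro allI impI, elim conjE)
      fix z h w k assume z: "in_DAs L z h" and zL: "z L = 0" and w: "in_DAs L w k" and zw: "ae_eq L (Ps z) w"
      have "ae_eq L (\<lambda>x. - k x) (\<lambda>x. Ps (Astar L g z h) x + Ps (\<Gamma>s 0) x)"
        using H[OF z w zw] zL by simp
      then show "ae_eq L (\<lambda>x. - k x - Ps (Astar L g z h) x) (\<lambda>x. 0)"
        using G0 unfolding ae_eq_AE by (elim AE_mp) (auto intro!: AE_I2)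
    qed
  next
    assume H: "\<forall>z h w k. in_DAs L z h \<and> z L = 0 \<and> in_DAs L w k \<and> ae_eq L (Ps z) w \<longrightarrow>
               ae_eq L (\<lambda>x. - k x - Ps (Astar L g z h) x) (\<lambda>x. 0)"
    define z0 where "z0 = (\<lambda>x. complex_of_real (x / L))"
    define h0 where "h0 = (\<lambda>x::real. complex_of_real (1 / L))"
    have d0: "in_DAs L z0 h0" unfolding z0_def h0_def by (rule DAs_z0[OF Lp])
    have z0L: "z0 L = 1" using Lp by (simp add: z0_def)
    obtain w0 k0 where w0: "in_DAs L w0 k0" and zw0: "ae_eq L (Ps z0) w0"
      using inv d0 by blast
    define \<phi> where "\<phi> = (\<lambda>x. - k0 x - Ps (Astar L g z0 h0) x)"
    have lphi: "l2 L \<phi>"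
      unfolding \<phi>_def using l2_diff[OF l2_uminus[OF DAs_h[OF w0]] adj_l2[OF A Astar_l2[OF g d0]]] by simp
    obtain \<gamma> where lg: "l2 L \<gamma>" and pg: "ae_eq L (Ps \<gamma>) \<phi>"
      using adj_surj[OF P A I lphi] by blast
    define \<Gamma> where "\<Gamma> f = l2_inner L f \<gamma>" for f
    define \<Gamma>s where "\<Gamma>s c = (\<lambda>x. c * \<gamma> x)" for c
    show "\<exists>\<Gamma> \<Gamma>s. bounded_form L \<Gamma> \<and> form_adjoint L \<Gamma> \<Gamma>s \<and>
            (\<forall>z h w k. in_DAs L z h \<and> in_DAs L w k \<and> ae_eq L (Ps z) w \<longrightarrow>
               ae_eq L (\<lambda>x. - k x) (\<lambda>x. Ps (Astar L g z h) x + Ps (\<Gamma>s (z L)) x))"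
    proof (intro exI conjI allI impI)
      show "bounded_form L \<Gamma>"
        unfolding bounded_form_def
      proof (intro conjI allI impI)
        fix f g' a b assume "l2 L f \<and> l2 L g'"
        then show "\<Gamma> (\<lambda>x. a * f x + b * g' x) = a * \<Gamma> f + b * \<Gamma> g'"
          unfolding \<Gamma>_def using l2_inner_lin_left[OF _ _ lg] by blast
      next
        show "\<exists>C. \<forall>f. l2 L f \<longrightarrow> cmod (\<Gamma> f) \<le> C * l2_norm L f"
        proof (intro exI allI impI)
          fix f assume f: "l2 L f"
          show "cmod (\<Gamma> f) \<le> sqrt (nsq L \<gamma>) * l2_norm L f"
            using l2_CS[OF f lg] by (simp add: \<Gamma>_def l2_norm_nsq f mult.commute)
        qed
      qed
      show "form_adjoint L \<Gamma> \<Gamma>s"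
        unfolding form_adjoint_def
      proof (intro conjI allI impI)
        fix c show "l2 L (\<Gamma>s c)" unfolding \<Gamma>s_def by (rule l2_scale[OF lg])
      next
        fix f c assume f: "l2 L f"
        show "\<Gamma> f * cnj c = l2_inner L f (\<Gamma>s c)"
          using l2_inner_lin_right[OF lg lg f, of c 0] by (simp add: \<Gamma>_def \<Gamma>s_def mult.commute)
      qed
      fix z h w k assume asm: "in_DAs L z h \<and> in_DAs L w k \<and> ae_eq L (Ps z) w"
      then have z: "in_DAs L z h" and w: "in_DAs L w k" and zw: "ae_eq L (Ps z) w" by auto
      define c where "c = z L"
      have dz': "in_DAs L (\<lambda>x. z x - c * z0 x) (\<lambda>x. h x - c * h0 x)" by (rule DAs_comb[OF z d0])
      have dw': "in_DAs L (\<lambda>x. w x - c * w0 x) (\<lambda>x. k x - c * k0 x)" by (rule DAs_comb[OF w w0])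
      have z'L: "z L - c * z0 L = 0" using z0L by (simp add: c_def)
      have lz: "l2 L z" "l2 L z0" using DAs_l2 z d0 by auto
      have "ae_eq L (Ps (\<lambda>x. 1 * z x + (- c) * z0 x)) (\<lambda>x. 1 * Ps z x + (- c) * Ps z0 x)"
        by (rule adj_lin[OF P A lz])
      then have e1: "ae_eq L (Ps (\<lambda>x. z x - c * z0 x)) (\<lambda>x. w x - c * w0 x)"
        using zw zw0 unfolding ae_eq_AE by simp (elim AE_mp, auto intro!: AE_I2)
      have H1: "ae_eq L (\<lambda>x. - (k x - c * k0 x) - Ps (Astar L g (\<lambda>x. z x - c * z0 x) (\<lambda>x. h x - c * h0 x)) x) (\<lambda>x. 0)"
        using H dz' z'L dw' e1 by blast
      have lA: "l2 L (Astar L g z h)" "l2 L (Astar L g z0 h0)" using Astar_l2[OF g] z d0 by auto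
      have "ae_eq L (Ps (Astar L g (\<lambda>x. z x - c * z0 x) (\<lambda>x. h x - c * h0 x)))
                    (Ps (\<lambda>x. Astar L g z h x - c * Astar L g z0 h0 x))"
        by (rule adj_ae[OF P A Astar_l2[OF g dz'] Astar_lin[OF g z d0]])
      moreover have "ae_eq L (Ps (\<lambda>x. 1 * Astar L g z h x + (- c) * Astar L g z0 h0 x))
                    (\<lambda>x. 1 * Ps (Astar L g z h) x + (- c) * Ps (Astar L g z0 h0) x)"
        by (rule adj_lin[OF P A lA])
      ultimately have e2: "ae_eq L (Ps (Astar L g (\<lambda>x. z x - c * z0 x) (\<lambda>x. h x - c * h0 x)))
                    (\<lambda>x. Ps (Astar L g z h) x - c * Ps (Astar L g z0 h0) x)"
        using ae_trans by simp
      have "ae_eq L (Ps (\<lambda>x. c * \<gamma> x + 0 * \<gamma> x)) (\<lambda>x. c * Ps \<gamma> x + 0 * Ps \<gamma> x)"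
        by (rule adj_lin[OF P A lg lg])
      then have e3: "ae_eq L (Ps (\<Gamma>s c)) (\<lambda>x. c * Ps \<gamma> x)" by (simp add: \<Gamma>s_def)
      let ?A = "Ps (Astar L g z h)"
      let ?Bz = "Ps (Astar L g z0 h0)"
      let ?Cz = "Ps (Astar L g (\<lambda>x. z x - c * z0 x) (\<lambda>x. h x - c * h0 x))"
      show "ae_eq L (\<lambda>x. - k x) (\<lambda>x. Ps (Astar L g z h) x + Ps (\<Gamma>s (z L)) x)"
        using H1 e2 e3 pg unfolding ae_eq_AE c_def[symmetric]
      proof eventually_elim
        case (elim x)
        have g1: "Ps \<gamma> x = - k0 x - ?Bz x" using elim(4) by (simp add: \<phi>_def)
        have g2: "?A x = ?Cz x + c * ?Bz x" using elim(2) unfolding eq_diff_eq by (rule sym)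
        have g3: "k x = - ?Cz x + c * k0 x" using elim(1) by (simp add: algebra_simps)
        show ?case using elim(3) by (simp add: g1 g2 g3 algebra_simps)
      qed
    qed
  qed
qed


end
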